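(* Let $X$ and $Y$ be $\mathfrak{Q}$-preordered $\mathfrak{Q}$-subsets. Then the following collections are pairwise in bijection: (a) $\mathfrak{Q}$-distributors from $X$ to $Y$; (b) $\mathfrak{Q}$-order-preserving maps $Y\to\mathsf{P}X$; (c) $\mathfrak{Q}$-order-preserving maps $X\to\mathsf{P}^{\dagger}Y$; (d) $\mathfrak{Q}$-polarities from $X$ to $Y$; (e) $\mathfrak{Q}$-axialities from $Y$ to $X$; (f) dual $\mathfrak{Q}$-axialities from $Y$ to $X$.
   Context: $(\mathfrak{Q},\&,e)$ is a non-trivial unital quantale (complete lattice with associative multiplication with unit $e$ preserving joins in each variable, $\bot<e$), implications $p\& q\le r\iff p\le r/ q\iff q\le p\backslash r$, $\mathcal{D}\mathfrak{Q}(p,q)=\{u\mid (u/ p)\& p=u=q\&(q\backslash u)\}$. A $\mathfrak{Q}$-subset is a set $X$ with $|\cdot|\colon X\to\mathfrak{Q}$; $\mathbf{1}_q$ is $\{*\}$ with $|*|=q$. A $\mathfrak{Q}$-relation from $X$ to $Y$ is a map $\phi\colon X\times Y\to\mathfrak{Q}$ with $\phi(x,y)\in\mathcal{D}\mathfrak{Q}(|x|,|y|)$, ordered pointwise; composition $(\psi\circ\phi)(x,z)=\bigvee_y(\psi(y,z)/|y|)\&\phi(x,y)$; $\xi\swarrow\phi$ is the largest $\psi'$ with $\psi'\circ\phi\le\xi$ and $\psi\searrow\xi$ the largest $\phi'$ with $\psi\circ\phi'\le\xi$. A $\mathfrak{Q}$-preordered $\mathfrak{Q}$-subset is a $\mathfrak{Q}$-subset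 $X$ with a $\mathfrak{Q}$-relation $1_X^{\natural}$ on $X$ with $\mathrm{id}_X\le 1_X^{\natural}$ ($\mathrm{id}_X(x,x)=|x|$, else $\bot$) and $1_X^{\natural}\circ 1_X^{\natural}\le 1_X^{\natural}$. A $\mathfrak{Q}$-order-preserving map $h\colon A\to B$ satisfies $|ha|=|a|$ and $1_A^{\natural}(a,a')\le 1_B^{\natural}(ha,ha')$; $h\le k$ means $|a|\le 1_B^{\natural}(ha,ka)$ for all $a$; a $\mathfrak{Q}$-Galois connection $h\dashv k$ means $1_A\le kh$ and $hk\le 1_B$. A $\mathfrak{Q}$-distributor from $X$ to $Y$ is a $\mathfrak{Q}$-relation $\phi$ with $1_Y^{\natural}\circ\phi\circ 1_X^{\natural}\le\phi$. $\mathsf{P}X$ consists of $\mathfrak{Q}$-relations $\mu$ from $X$ to some $\mathbf{1}_q$ with $\mu\circ 1_X^{\natural}\le\mu$, $|\mu|=q$, $\mathfrak{Q}$-preorder $1_{\mathsf{P}X}^{\natural}(\mu,\mu')=\mu'\swarrow\mu$; $\mathsf{P}^{\dagger}X$ consists of $\mathfrak{Q}$-relations $\lambda$ from some $\mathbf{1}_q$ to $X$ with $1_X^{\natural}\circ\lambda\le\lambda$, $|\lambda|=q$, $1_{\mathsf{P}^{\dagger}X}^{\natural}(\lambda,\lambda')=\lambda'\searrow\lambda$. A $\mathfrak{Q}$-polarity from $X$ to $Y$ is a $\mathfrak{Q}$-Galois connection $f\dashv g$ with $f\colon\mathsf{P}X\to\mathsf{P}^{\dagger}Y$, $g\colon\mathsf{P}^{\dagger}Y\to\mathsf{P}X$;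 a $\mathfrak{Q}$-axiality from $Y$ to $X$ is a $\mathfrak{Q}$-Galois connection $f\dashv g$ with $f\colon\mathsf{P}Y\to\mathsf{P}X$, $g\colon\mathsf{P}X\to\mathsf{P}Y$; a dual $\mathfrak{Q}$-axiality from $Y$ to $X$ is a $\mathfrak{Q}$-Galois connection $f\dashv g$ with $f\colon\mathsf{P}^{\dagger}Y\to\mathsf{P}^{\dagger}X$, $g\colon\mathsf{P}^{\dagger}X\to\mathsf{P}^{\dagger}Y$. *)

theory Defs
  imports Main
begin

class quantale = complete_lattice +
  fixes qmult :: "'a \<Rightarrow> 'a \<Rightarrow> 'a"
    and qunit :: 'a
  assumes qmult_assoc: "qmult (qmult a b) c = qmult a (qmult b c)"
    and qunit_left: "qmult qunit a = a"
    and qunit_right: "qmult a qunit = a"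
    and qmult_Sup_left: "qmult (Sup A) b = Sup ((\<lambda>a. qmult a b) ` A)"
    and qmult_Sup_right: "qmult a (Sup B) = Sup ((\<lambda>b. qmult a b) ` B)"
    and qunit_nontrivial: "bot < qunit"

text \<open>Implications: rdiv r q = r / q, ldiv p r = p \ r.\<close>

definition rdiv :: "'q::quantale \<Rightarrow> 'q \<Rightarrow> 'q" where
  "rdiv r q = Sup {p. qmult p q \<le> r}"

definition ldiv :: "'q::quantale \<Rightarrow> 'q \<Rightarrow> 'q" where
  "ldiv p r = Sup {q. qmult p q \<le> r}"

definition DQ :: "'q::quantale \<Rightarrow> 'q \<Rightarrow> 'q set" where
  "DQ p q = {u. qmult (rdiv u p) p = u \<and> u = qmult q (ldiv q u)}"

text \<open>A Q-subset: a carrier set with an extent map.\<close>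
type_synonym ('a, 'q) qset = "'a set \<times> ('a \<Rightarrow> 'q)"

definition one_q :: "'q \<Rightarrow> (unit, 'q) qset" where
  "one_q q = ({()}, \<lambda>_. q)"

text \<open>Q-relations are represented extensionally: value bot outside the carriers.\<close>
definition qrel :: "('a, 'q::quantale) qset \<Rightarrow> ('b, 'q) qset \<Rightarrow> ('a \<Rightarrow> 'b \<Rightarrow> 'q) \<Rightarrow> bool" where
  "qrel A B \<phi> \<longleftrightarrow>
     (\<forall>x\<in>fst A. \<forall>y\<in>fst B. \<phi> x y \<in> DQ (snd A x) (snd B y)) \<and>
     (\<forall>x y. x \<notin> fst A \<or> y \<notin> fst B \<longrightarrow> \<phi> x y = bot)"

definition rle :: "('a, 'q::quantale) qset \<Rightarrow> ('b, 'q) qset \<Rightarrow> ('a \<Rightarrow> 'b \<Rightarrow> 'q) \<Rightarrow> ('a \<Rightarrow> 'b \<Rightarrow> 'q) \<Rightarrow> bool" where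
  "rle A B \<phi> \<psi> \<longleftrightarrow> (\<forall>x\<in>fst A. \<forall>y\<in>fst B. \<phi> x y \<le> \<psi> x y)"

definition qcomp :: "('b, 'q::quantale) qset \<Rightarrow> ('b \<Rightarrow> 'c \<Rightarrow> 'q) \<Rightarrow> ('a \<Rightarrow> 'b \<Rightarrow> 'q) \<Rightarrow> ('a \<Rightarrow> 'c \<Rightarrow> 'q)" where
  "qcomp B \<psi> \<phi> = (\<lambda>x z. Sup ((\<lambda>y. qmult (rdiv (\<psi> y z) (snd B y)) (\<phi> x y)) ` fst B))"

definition qid :: "('a, 'q::quantale) qset \<Rightarrow> ('a \<Rightarrow> 'a \<Rightarrow> 'q)" where
  "qid A = (\<lambda>x x'. if x \<in> fst A \<and> x' = x then snd A x else bot)"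

text \<open>xi swarrow phi (phi : A -> B, xi : A -> C): the largest psi' : B -> C with
  psi' o phi <= xi.\<close>
definition rimp :: "('a, 'q::quantale) qset \<Rightarrow> ('b, 'q) qset \<Rightarrow> ('c, 'q) qset \<Rightarrow>
    ('a \<Rightarrow> 'c \<Rightarrow> 'q) \<Rightarrow> ('a \<Rightarrow> 'b \<Rightarrow> 'q) \<Rightarrow> ('b \<Rightarrow> 'c \<Rightarrow> 'q)" where
  "rimp A B C \<xi> \<phi> = (THE \<psi>. qrel B C \<psi> \<and> rle A C (qcomp B \<psi> \<phi>) \<xi> \<and>
       (\<forall>\<psi>'. qrel B C \<psi>' \<and> rle A C (qcomp B \<psi>' \<phi>) \<xi> \<longrightarrow> rle B C \<psi>' \<psi>))"

text \<open>psi searrow xi (psi : B -> C, xi : A -> C): the largest phi' : A -> B with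
  psi o phi' <= xi.\<close>
definition limp :: "('a, 'q::quantale) qset \<Rightarrow> ('b, 'q) qset \<Rightarrow> ('c, 'q) qset \<Rightarrow>
    ('b \<Rightarrow> 'c \<Rightarrow> 'q) \<Rightarrow> ('a \<Rightarrow> 'c \<Rightarrow> 'q) \<Rightarrow> ('a \<Rightarrow> 'b \<Rightarrow> 'q)" where
  "limp A B C \<psi> \<xi> = (THE \<phi>. qrel A B \<phi> \<and> rle A C (qcomp B \<psi> \<phi>) \<xi> \<and>
       (\<forall>\<phi>'. qrel A B \<phi>' \<and> rle A C (qcomp B \<psi> \<phi>') \<xi> \<longrightarrow> rle A B \<phi>' \<phi>))"

record ('a, 'q) qpos =
  car :: "'a set"
  ext :: "'a \<Rightarrow> 'q"
  pre :: "'a \<Rightarrow> 'a \<Rightarrow> 'q"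

definition qs :: "('a, 'q) qpos \<Rightarrow> ('a, 'q) qset" where
  "qs X = (car X, ext X)"

definition qpreordered :: "('a, 'q::quantale) qpos \<Rightarrow> bool" where
  "qpreordered X \<longleftrightarrow>
     qrel (qs X) (qs X) (pre X) \<and>
     rle (qs X) (qs X) (qid (qs X)) (pre X) \<and>
     rle (qs X) (qs X) (qcomp (qs X) (pre X) (pre X)) (pre X)"

definition qdist :: "('a, 'q::quantale) qpos \<Rightarrow> ('b, 'q) qpos \<Rightarrow> ('a \<Rightarrow> 'b \<Rightarrow> 'q) \<Rightarrow> bool" where
  "qdist X Y \<phi> \<longleftrightarrow> qrel (qs X) (qs Y) \<phi> \<and>
     rle (qs X) (qs Y) (qcomp (qs X) (qcomp (qs Y) (pre Y) \<phi>) (pre X)) \<phi>"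

definition distributors :: "('a, 'q::quantale) qpos \<Rightarrow> ('b, 'q) qpos \<Rightarrow> ('a \<Rightarrow> 'b \<Rightarrow> 'q) set" where
  "distributors X Y = {\<phi>. qdist X Y \<phi>}"

definition PP_car :: "('a, 'q::quantale) qpos \<Rightarrow> ('q \<times> ('a \<Rightarrow> unit \<Rightarrow> 'q)) set" where
  "PP_car X = {(q, \<mu>). qrel (qs X) (one_q q) \<mu> \<and>
                        rle (qs X) (one_q q) (qcomp (qs X) \<mu> (pre X)) \<mu>}"

definition PP :: "('a, 'q::quantale) qpos \<Rightarrow> ('q \<times> ('a \<Rightarrow> unit \<Rightarrow> 'q), 'q) qpos" where
  "PP X = \<lparr> car = PP_car X, ext = fst,
            pre = (\<lambda>(q, \<mu>) (q', \<mu>').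
                     if (q, \<mu>) \<in> PP_car X \<and> (q', \<mu>') \<in> PP_car X
                     then rimp (qs X) (one_q q) (one_q q') \<mu>' \<mu> () ()
                     else bot) \<rparr>"

definition PD_car :: "('a, 'q::quantale) qpos \<Rightarrow> ('q \<times> (unit \<Rightarrow> 'a \<Rightarrow> 'q)) set" where
  "PD_car X = {(q, l). qrel (one_q q) (qs X) l \<and>
                        rle (one_q q) (qs X) (qcomp (qs X) (pre X) l) l}"

definition PD :: "('a, 'q::quantale) qpos \<Rightarrow> ('q \<times> (unit \<Rightarrow> 'a \<Rightarrow> 'q), 'q) qpos" where
  "PD X = \<lparr> car = PD_car X, ext = fst,
            pre = (\<lambda>(q, l) (q', l').
                     if (q, l) \<in> PD_car X \<and> (q', l') \<in> PD_car X
                     then limp (one_q q) (one_q q') (qs X) l' l () ()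
                     else bot) \<rparr>"

text \<open>Maps are represented extensionally (undefined outside the domain carrier).\<close>
definition qmono :: "('a, 'q::quantale) qpos \<Rightarrow> ('b, 'q) qpos \<Rightarrow> ('a \<Rightarrow> 'b) \<Rightarrow> bool" where
  "qmono A B h \<longleftrightarrow>
     (\<forall>a\<in>car A. h a \<in> car B \<and> ext B (h a) = ext A a) \<and>
     (\<forall>a\<in>car A. \<forall>a'\<in>car A. pre A a a' \<le> pre B (h a) (h a')) \<and>
     (\<forall>a. a \<notin> car A \<longrightarrow> h a = undefined)"

definition qmaps :: "('a, 'q::quantale) qpos \<Rightarrow> ('b, 'q) qpos \<Rightarrow> ('a \<Rightarrow> 'b) set" where
  "qmaps A B = {h. qmono A B h}"

definition qgalois :: "('a, 'q::quantale) qpos \<Rightarrow> ('b, 'q) qpos \<Rightarrow> ('a \<Rightarrow> 'b) \<Rightarrow> ('b \<Rightarrow> 'a) \<Rightarrow> bool" where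
  "qgalois A B f g \<longleftrightarrow> qmono A B f \<and> qmono B A g \<and>
     (\<forall>a\<in>car A. ext A a \<le> pre A a (g (f a))) \<and>
     (\<forall>b\<in>car B. ext B b \<le> pre B (f (g b)) b)"

definition qgalois_set :: "('a, 'q::quantale) qpos \<Rightarrow> ('b, 'q) qpos \<Rightarrow> (('a \<Rightarrow> 'b) \<times> ('b \<Rightarrow> 'a)) set" where
  "qgalois_set A B = {(f, g). qgalois A B f g}"

definition polarities where "polarities X Y = qgalois_set (PP X) (PD Y)"
definition axialities where "axialities Y X = qgalois_set (PP Y) (PP X)"
definition dual_axialities where "dual_axialities Y X = qgalois_set (PD Y) (PD X)"

end

theory Submission
  imports Defs
begin


lemma qmult_mono_l: "(a::'q::quantale) \<le> b \<Longrightarrow> qmult a c \<le> qmult b c"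
proof -
  assume "a \<le> b"
  hence "b = Sup {a,b}" by (simp add: sup_absorb2)
  hence "qmult b c = Sup {qmult a c, qmult b c}" using qmult_Sup_left[of "{a,b}" c] by simp
  also have "\<dots> = sup (qmult a c) (qmult b c)" by simp
  finally show ?thesis by (metis sup.cobounded1)
qed

lemma qmult_mono_r: "(a::'q::quantale) \<le> b \<Longrightarrow> qmult c a \<le> qmult c b"
proof -
  assume "a \<le> b"
  hence "b = Sup {a,b}" by (simp add: sup_absorb2)
  hence "qmult c b = Sup {qmult c a, qmult c b}" using qmult_Sup_right[of c "{a,b}"] by simp
  also have "\<dots> = sup (qmult c a) (qmult c b)" by simp
  finally show ?thesis by (metis sup.cobounded1)
qed

lemma qmult_bot_l[simp]: "qmult (bot::'q::quantale) a = bot"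
  using qmult_Sup_left[of "{}" a] by simp
lemma qmult_bot_r[simp]: "qmult a (bot::'q::quantale) = bot"
  using qmult_Sup_right[of a "{}"] by simp

lemma rdiv_adj: "qmult (p::'q::quantale) q \<le> r \<longleftrightarrow> p \<le> rdiv r q"
proof
  assume "qmult p q \<le> r" thus "p \<le> rdiv r q" unfolding rdiv_def by (simp add: Sup_upper)
next
  assume h: "p \<le> rdiv r q"
  have "qmult (rdiv r q) q = Sup ((\<lambda>a. qmult a q) ` {p. qmult p q \<le> r})"
    unfolding rdiv_def by (rule qmult_Sup_left)
  also have "\<dots> \<le> r" by (auto intro: Sup_least)
  finally show "qmult p q \<le> r" using qmult_mono_l[OF h, of q] by simp
qed

lemma ldiv_adj: "qmult (p::'q::quantale) q \<le> r \<longleftrightarrow> q \<le> ldiv p r"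
proof
  assume "qmult p q \<le> r" thus "q \<le> ldiv p r" unfolding ldiv_def by (simp add: Sup_upper)
next
  assume h: "q \<le> ldiv p r"
  have "qmult p (ldiv p r) = Sup ((\<lambda>a. qmult p a) ` {q. qmult p q \<le> r})"
    unfolding ldiv_def by (rule qmult_Sup_right)
  also have "\<dots> \<le> r" by (auto intro: Sup_least)
  finally show "qmult p q \<le> r" using qmult_mono_r[OF h, of p] by simp
qed

lemma rdiv_cancel: "qmult (rdiv r q) q \<le> (r::'q::quantale)"
  using rdiv_adj by blast
lemma ldiv_cancel: "qmult p (ldiv p r) \<le> (r::'q::quantale)"
  using ldiv_adj by blast

lemma rdiv_mono: "(a::'q::quantale) \<le> b \<Longrightarrow> rdiv a q \<le> rdiv b q"
  using rdiv_adj[of "rdiv a q" q b] rdiv_cancel[of a q] by (meson order_trans)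
lemma ldiv_mono: "(a::'q::quantale) \<le> b \<Longrightarrow> ldiv q a \<le> ldiv q b"
  using ldiv_adj[of q "ldiv q a" b] ldiv_cancel[of q a] by (meson order_trans)

lemma unit_le_rdiv: "qunit \<le> rdiv p (p::'q::quantale)"
  by (simp add: rdiv_adj[symmetric] qunit_left)


lemma mult_rdiv_le: "qmult a (rdiv b p) \<le> rdiv (qmult a b) (p::'q::quantale)"
  by (metis rdiv_adj qmult_assoc qmult_mono_r rdiv_cancel)

lemma rdiv_mult_le: "qmult (rdiv a p) (rdiv b q) \<le> rdiv (qmult (rdiv a p) b) (q::'q::quantale)"
  by (rule mult_rdiv_le)

lemma le_mult_unit_rdiv: "(u::'q::quantale) \<le> qmult (rdiv a p) u" if "p \<le> a" for p
proof -
  have "qunit \<le> rdiv a p" using unit_le_rdiv rdiv_mono that order_trans by blast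
  thus ?thesis using qmult_mono_l[of qunit "rdiv a p" u] by (simp add: qunit_left)
qed

lemma DQ_iff: "u \<in> DQ p q \<longleftrightarrow> qmult (rdiv u p) p = u \<and> u = qmult q (ldiv q u)"
  by (simp add: DQ_def)

lemma DQ_r: "u \<in> DQ p q \<Longrightarrow> qmult (rdiv u p) p = u" by (simp add: DQ_def)
lemma DQ_l: "u \<in> DQ p q \<Longrightarrow> qmult q (ldiv q u) = u" by (simp add: DQ_def)

lemma diag_id: "qmult (rdiv b q) q = b \<Longrightarrow> qmult q (ldiv q a) = a \<Longrightarrow>
   qmult (rdiv b q) a = qmult b (ldiv q (a::'q::quantale))"
  by (metis qmult_assoc)

lemma le_rdiv_p: "t = qmult s p \<Longrightarrow> t \<le> T \<Longrightarrow> t \<le> qmult (rdiv T p) (p::'q::quantale)"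
  by (metis rdiv_adj order_refl order_trans qmult_mono_l)

lemma DQ_comp: "v \<in> DQ p' p'' \<Longrightarrow> w \<in> DQ p p' \<Longrightarrow> qmult (rdiv v p') w \<in> DQ p p''"
proof -
  assume v: "v \<in> DQ p' p''" and w: "w \<in> DQ p p'"
  define c where "c = qmult (rdiv v p') w"
  have c2: "c = qmult v (ldiv p' w)" unfolding c_def using diag_id DQ_r[OF v] DQ_l[OF w] by blast
  have "c = qmult (qmult (rdiv v p') (rdiv w p)) p" unfolding c_def
    by (metis DQ_r[OF w] qmult_assoc)
  hence 1: "qmult (rdiv c p) p = c"
    by (metis le_rdiv_p order_refl rdiv_cancel antisym)
  have "c = qmult p'' (qmult (ldiv p'' v) (ldiv p' w))" unfolding c2
    by (metis DQ_l[OF v] qmult_assoc)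
  hence "qmult p'' (ldiv p'' c) = c"
    by (metis antisym ldiv_adj ldiv_cancel qmult_mono_r order_refl)
  thus ?thesis using 1 unfolding c_def DQ_def by auto
qed

lemma DQ_Sup: "S \<subseteq> DQ p q \<Longrightarrow> Sup S \<in> DQ p q"
proof -
  assume S: "S \<subseteq> DQ p q"
  have 1: "qmult (rdiv (Sup S) p) p = Sup S"
  proof (rule antisym)
    show "qmult (rdiv (Sup S) p) p \<le> Sup S" by (rule rdiv_cancel)
    show "Sup S \<le> qmult (rdiv (Sup S) p) p"
    proof (rule Sup_least)
      fix s assume s: "s \<in> S"
      hence "s = qmult (rdiv s p) p" using S DQ_r by (metis subsetD)
      thus "s \<le> qmult (rdiv (Sup S) p) p" using le_rdiv_p s by (metis Sup_upper)
    qed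
  qed
  have 2: "qmult q (ldiv q (Sup S)) = Sup S"
  proof (rule antisym)
    show "qmult q (ldiv q (Sup S)) \<le> Sup S" by (rule ldiv_cancel)
    show "Sup S \<le> qmult q (ldiv q (Sup S))"
    proof (rule Sup_least)
      fix s assume s: "s \<in> S"
      hence "s = qmult q (ldiv q s)" using S DQ_l by (metis subsetD)
      also have "\<dots> \<le> qmult q (ldiv q (Sup S))" using s by (intro qmult_mono_r ldiv_mono Sup_upper)
      finally show "s \<le> qmult q (ldiv q (Sup S))" .
    qed
  qed
  show ?thesis using 1 2 by (simp add: DQ_def)
qed

lemma DQ_bot: "bot \<in> DQ p (q::'q::quantale)"
  using DQ_Sup[of "{}"] by simp

lemma DQ_refl: "p \<in> DQ p (p::'q::quantale)"
proof -
  have "qmult (rdiv p p) p = p"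
    by (metis antisym rdiv_cancel le_rdiv_p qunit_left order_refl)
  moreover have "qmult p (ldiv p p) = p"
    by (metis antisym ldiv_cancel ldiv_adj qmult_mono_r qunit_right order_refl)
  ultimately show ?thesis by (simp add: DQ_def)
qed


lemma G1:
  fixes p q :: "'q::quantale" and c d :: "'i \<Rightarrow> 'q" and I :: "'i set"
  assumes c: "\<forall>i\<in>I. qmult p (ldiv p (c i)) = (c i::'q::quantale)"
  defines "M \<equiv> Sup {u\<in>DQ p q. \<forall>i\<in>I. qmult (rdiv u p) (c i) \<le> d i}"
  shows "M \<in> DQ p q" "\<forall>i\<in>I. qmult (rdiv M p) (c i) \<le> d i"
proof -
  show M: "M \<in> DQ p q" unfolding M_def by (rule DQ_Sup) auto
  show "\<forall>i\<in>I. qmult (rdiv M p) (c i) \<le> d i"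
  proof
    fix i assume i: "i \<in> I"
    have e: "\<And>u. u \<in> DQ p q \<Longrightarrow> qmult (rdiv u p) (c i) = qmult u (ldiv p (c i))"
      using diag_id DQ_r c i by blast
    have "qmult M (ldiv p (c i)) = Sup ((\<lambda>u. qmult u (ldiv p (c i))) ` {u\<in>DQ p q. \<forall>i\<in>I. qmult (rdiv u p) (c i) \<le> d i})"
      unfolding M_def by (rule qmult_Sup_left)
    also have "\<dots> \<le> d i" using i e by (auto intro!: Sup_least)
    finally show "qmult (rdiv M p) (c i) \<le> d i" using e[OF M] by simp
  qed
qed

lemma G2:
  fixes p q :: "'q::quantale" and c d :: "'i \<Rightarrow> 'q" and I :: "'i set"
  defines "M \<equiv> Sup {u\<in>DQ p q. \<forall>i\<in>I. qmult (c i) u \<le> (d i::'q::quantale)}"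
  shows "M \<in> DQ p q" "\<forall>i\<in>I. qmult (c i) M \<le> d i"
proof -
  show M: "M \<in> DQ p q" unfolding M_def by (rule DQ_Sup) auto
  show "\<forall>i\<in>I. qmult (c i) M \<le> d i"
  proof
    fix i assume i: "i \<in> I"
    have "qmult (c i) M = Sup ((\<lambda>u. qmult (c i) u) ` {u\<in>DQ p q. \<forall>i\<in>I. qmult (c i) u \<le> d i})"
      unfolding M_def by (rule qmult_Sup_right)
    also have "\<dots> \<le> d i" using i by (auto intro!: Sup_least)
    finally show "qmult (c i) M \<le> d i" .
  qed
qed

lemma qrel_one: "qrel (one_q q) (one_q q') \<psi> \<longleftrightarrow> \<psi> () () \<in> DQ q q'"
  by (simp add: qrel_def one_q_def)

lemma qcomp_one: "qcomp (one_q q) \<psi> \<mu> = (\<lambda>x z. qmult (rdiv (\<psi> () z) q) (\<mu> x ()))"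
  by (simp add: qcomp_def one_q_def)

lemma rle_one2: "rle A (one_q q) F G \<longleftrightarrow> (\<forall>x\<in>fst A. F x () \<le> G x ())"
  by (simp add: rle_def one_q_def)
lemma rle_one1: "rle (one_q q) A F G \<longleftrightarrow> (\<forall>y\<in>fst A. F () y \<le> G () y)"
  by (simp add: rle_def one_q_def)

lemma fst_one_q[simp]: "fst (one_q q) = {()}" by (simp add: one_q_def)
lemma snd_one_q[simp]: "snd (one_q q) x = q" by (simp add: one_q_def)

lemma fun_unit_eq: "(f::unit \<Rightarrow> unit \<Rightarrow> 'q) = (\<lambda>_ _. f () ())"
  by (intro ext) simp

definition hPP :: "('a, 'q::quantale) qpos \<Rightarrow> 'q \<times> ('a \<Rightarrow> unit \<Rightarrow> 'q) \<Rightarrow> 'q \<times> ('a \<Rightarrow> unit \<Rightarrow> 'q) \<Rightarrow> 'q" where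
  "hPP X a b = Sup {u \<in> DQ (fst a) (fst b). \<forall>x\<in>car X. qmult (rdiv u (fst a)) (snd a x ()) \<le> snd b x ()}"

definition hPD :: "('a, 'q::quantale) qpos \<Rightarrow> 'q \<times> (unit \<Rightarrow> 'a \<Rightarrow> 'q) \<Rightarrow> 'q \<times> (unit \<Rightarrow> 'a \<Rightarrow> 'q) \<Rightarrow> 'q" where
  "hPD Y a b = Sup {w \<in> DQ (fst a) (fst b). \<forall>y\<in>car Y. qmult (rdiv (snd b () y) (fst b)) w \<le> snd a () y}"

lemma PP_carD: "a \<in> PP_car X \<Longrightarrow> x \<in> car X \<Longrightarrow> snd a x () \<in> DQ (ext X x) (fst a)"
  by (auto simp: PP_car_def qrel_def qs_def one_q_def)
lemma PP_carD2: "a \<in> PP_car X \<Longrightarrow> x \<notin> car X \<Longrightarrow> snd a x u = bot"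
  by (auto simp: PP_car_def qrel_def qs_def one_q_def)
lemma PP_carD3: "a \<in> PP_car X \<Longrightarrow> x \<in> car X \<Longrightarrow> x' \<in> car X \<Longrightarrow>
   qmult (rdiv (snd a x' ()) (ext X x')) (pre X x x') \<le> snd a x ()"
proof -
  assume a: "a \<in> PP_car X" and x: "x \<in> car X" and x': "x' \<in> car X"
  have "rle (qs X) (one_q (fst a)) (qcomp (qs X) (snd a) (pre X)) (snd a)"
    using a by (auto simp: PP_car_def)
  hence "qcomp (qs X) (snd a) (pre X) x () \<le> snd a x ()" using x by (simp add: rle_one2 qs_def)
  moreover have "qmult (rdiv (snd a x' ()) (ext X x')) (pre X x x') \<le> qcomp (qs X) (snd a) (pre X) x ()"
    unfolding qcomp_def qs_def using x' by (auto intro!: Sup_upper)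
  ultimately show ?thesis by simp
qed

lemma PD_carD: "b \<in> PD_car Y \<Longrightarrow> y \<in> car Y \<Longrightarrow> snd b () y \<in> DQ (fst b) (ext Y y)"
  by (auto simp: PD_car_def qrel_def qs_def one_q_def)
lemma PD_carD2: "b \<in> PD_car Y \<Longrightarrow> y \<notin> car Y \<Longrightarrow> snd b u y = bot"
  by (auto simp: PD_car_def qrel_def qs_def one_q_def)
lemma PD_carD3: "b \<in> PD_car Y \<Longrightarrow> y \<in> car Y \<Longrightarrow> y' \<in> car Y \<Longrightarrow>
   qmult (rdiv (pre Y y' y) (ext Y y')) (snd b () y') \<le> snd b () y"
proof -
  assume a: "b \<in> PD_car Y" and x: "y \<in> car Y" and x': "y' \<in> car Y"
  have "rle (one_q (fst b)) (qs Y) (qcomp (qs Y) (pre Y) (snd b)) (snd b)"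
    using a by (auto simp: PD_car_def)
  hence "qcomp (qs Y) (pre Y) (snd b) () y \<le> snd b () y" using x by (simp add: rle_one1 qs_def)
  moreover have "qmult (rdiv (pre Y y' y) (ext Y y')) (snd b () y') \<le> qcomp (qs Y) (pre Y) (snd b) () y"
    unfolding qcomp_def qs_def using x' by (auto intro!: Sup_upper)
  ultimately show ?thesis by simp
qed

lemma hPP_props:
  assumes "a \<in> PP_car X"
  shows "hPP X a b \<in> DQ (fst a) (fst b)"
    "\<forall>x\<in>car X. qmult (rdiv (hPP X a b) (fst a)) (snd a x ()) \<le> snd b x ()"
  using G1[where p="fst a" and q="fst b" and I="car X" and c="\<lambda>x. snd a x ()" and d="\<lambda>x. snd b x ()"] PP_carD[OF assms] DQ_l
  unfolding hPP_def by blast+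

lemma hPP_ge: "u \<in> DQ (fst a) (fst b) \<Longrightarrow> \<forall>x\<in>car X. qmult (rdiv u (fst a)) (snd a x ()) \<le> snd b x ()
  \<Longrightarrow> u \<le> hPP X a b"
  unfolding hPP_def by (auto intro: Sup_upper)

lemma hPD_props:
  shows "hPD Y a b \<in> DQ (fst a) (fst b)"
    "\<forall>y\<in>car Y. qmult (rdiv (snd b () y) (fst b)) (hPD Y a b) \<le> snd a () y"
  using G2[where p="fst a" and q="fst b" and c="\<lambda>y. rdiv (snd b () y) (fst b)" and d="\<lambda>y. snd a () y" and I="car Y"]
  unfolding hPD_def by blast+

lemma hPD_ge: "w \<in> DQ (fst a) (fst b) \<Longrightarrow> \<forall>y\<in>car Y. qmult (rdiv (snd b () y) (fst b)) w \<le> snd a () y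
  \<Longrightarrow> w \<le> hPD Y a b"
  unfolding hPD_def by (auto intro: Sup_upper)

lemma pre_PP: assumes a: "a \<in> PP_car X" and b: "b \<in> PP_car X"
  shows "pre (PP X) a b = hPP X a b"
proof -
  obtain q \<mu> where aa: "a = (q, \<mu>)" by (cases a)
  obtain q' \<mu>' where bb: "b = (q', \<mu>')" by (cases b)
  let ?P = "\<lambda>\<psi>. qrel (one_q q) (one_q q') \<psi> \<and> rle (qs X) (one_q q') (qcomp (one_q q) \<psi> \<mu>) \<mu>' \<and>
       (\<forall>\<psi>'. qrel (one_q q) (one_q q') \<psi>' \<and> rle (qs X) (one_q q') (qcomp (one_q q) \<psi>' \<mu>) \<mu>' \<longrightarrow> rle (one_q q) (one_q q') \<psi>' \<psi>)"
  have "(THE \<psi>. ?P \<psi>) = (\<lambda>_ _. hPP X a b)"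
  proof (rule the_equality)
    show "?P (\<lambda>_ _. hPP X a b)"
      using hPP_props[OF a, where b=b] hPP_ge[where X=X and a=a and b=b] unfolding aa bb
      by (auto simp: qrel_one qcomp_one rle_one2 rle_one1 qs_def)
  next
    fix \<psi> assume h: "?P \<psi>"
    have 1: "\<psi> () () \<le> hPP X a b"
      using h unfolding aa bb by (intro hPP_ge) (auto simp: qrel_one qcomp_one rle_one2 qs_def)
    have "hPP X a b \<le> \<psi> () ()"
      using h hPP_props[OF a, where b=b] unfolding aa bb
      by (auto simp: qrel_one qcomp_one rle_one2 rle_one1 qs_def)
    hence "\<psi> () () = hPP X a b" using 1 by simp
    thus "\<psi> = (\<lambda>_ _. hPP X a b)" by (metis fun_unit_eq)
  qed
  thus ?thesis using a b unfolding aa bb by (simp add: PP_def rimp_def)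
qed

lemma pre_PD: assumes a: "a \<in> PD_car Y" and b: "b \<in> PD_car Y"
  shows "pre (PD Y) a b = hPD Y a b"
proof -
  obtain q \<mu> where aa: "a = (q, \<mu>)" by (cases a)
  obtain q' \<mu>' where bb: "b = (q', \<mu>')" by (cases b)
  let ?P = "\<lambda>\<psi>. qrel (one_q q) (one_q q') \<psi> \<and> rle (one_q q) (qs Y) (qcomp (one_q q') \<mu>' \<psi>) \<mu> \<and>
       (\<forall>\<psi>'. qrel (one_q q) (one_q q') \<psi>' \<and> rle (one_q q) (qs Y) (qcomp (one_q q') \<mu>' \<psi>') \<mu> \<longrightarrow> rle (one_q q) (one_q q') \<psi>' \<psi>)"
  have "(THE \<psi>. ?P \<psi>) = (\<lambda>_ _. hPD Y a b)"
  proof (rule the_equality)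
    show "?P (\<lambda>_ _. hPD Y a b)"
      using hPD_props[where Y=Y and a=a and b=b] hPD_ge[where Y=Y and a=a and b=b] unfolding aa bb
      by (auto simp: qrel_one qcomp_one rle_one2 rle_one1 qs_def)
  next
    fix \<psi> assume h: "?P \<psi>"
    have 1: "\<psi> () () \<le> hPD Y a b"
      using h unfolding aa bb by (intro hPD_ge) (auto simp: qrel_one qcomp_one rle_one1 qs_def)
    have "hPD Y a b \<le> \<psi> () ()"
      using h hPD_props[where Y=Y and a=a and b=b] unfolding aa bb
      by (auto simp: qrel_one qcomp_one rle_one2 rle_one1 qs_def)
    hence "\<psi> () () = hPD Y a b" using 1 by simp
    thus "\<psi> = (\<lambda>_ _. hPD Y a b)" by (metis fun_unit_eq)
  qed
  thus ?thesis using a b unfolding aa bb by (simp add: PD_def limp_def)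
qed


lemma car_PP[simp]: "car (PP X) = PP_car X" and ext_PP[simp]: "ext (PP X) = fst"
  by (simp_all add: PP_def)
lemma car_PD[simp]: "car (PD X) = PD_car X" and ext_PD[simp]: "ext (PD X) = fst"
  by (simp_all add: PD_def)

lemma le_unit_l: "u \<in> DQ p q \<Longrightarrow> p \<le> a \<Longrightarrow> u \<le> qmult (rdiv u p) (a::'q::quantale)"
  by (metis DQ_r qmult_mono_r order_eq_refl)

lemma pp_le_iff: assumes a: "a \<in> PP_car X" and b: "b \<in> PP_car X" and "fst a = q" "fst b = q"
  shows "q \<le> hPP X a b \<longleftrightarrow> (\<forall>x\<in>car X. snd a x () \<le> snd b x ())"
proof
  have e: "\<And>x. x \<in> car X \<Longrightarrow> qmult (rdiv q q) (snd a x ()) = snd a x ()"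
    using diag_id[of q q] DQ_r[OF DQ_refl] DQ_l PP_carD[OF a] assms(3) by (metis qmult_assoc)
  {
    assume h: "q \<le> hPP X a b"
    show "\<forall>x\<in>car X. snd a x () \<le> snd b x ()"
    proof
      fix x assume x: "x \<in> car X"
      have "snd a x () = qmult (rdiv q q) (snd a x ())" using e x by simp
      also have "\<dots> \<le> qmult (rdiv (hPP X a b) q) (snd a x ())" by (intro qmult_mono_l rdiv_mono h)
      also have "\<dots> \<le> snd b x ()" using hPP_props(2)[OF a, where b=b] x assms(3) by auto
      finally show "snd a x () \<le> snd b x ()" .
    qed
  }
  assume h: "\<forall>x\<in>car X. snd a x () \<le> snd b x ()"
  show "q \<le> hPP X a b" using h e DQ_refl[of q] assms(3,4) by (intro hPP_ge) auto
qed

lemma pd_le_iff: assumes a: "a \<in> PD_car Y" and b: "b \<in> PD_car Y" and "fst a = q" "fst b = q"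
  shows "q \<le> hPD Y a b \<longleftrightarrow> (\<forall>y\<in>car Y. snd b () y \<le> snd a () y)"
proof
  have e: "\<And>y. y \<in> car Y \<Longrightarrow> qmult (rdiv (snd b () y) q) q = snd b () y"
    using DQ_r PD_carD[OF b] assms(4) by metis
  {
    assume h: "q \<le> hPD Y a b"
    show "\<forall>y\<in>car Y. snd b () y \<le> snd a () y"
    proof
      fix y assume x: "y \<in> car Y"
      have "snd b () y = qmult (rdiv (snd b () y) q) q" using e x by simp
      also have "\<dots> \<le> qmult (rdiv (snd b () y) q) (hPD Y a b)" by (intro qmult_mono_r h)
      also have "\<dots> \<le> snd a () y" using hPD_props(2)[where Y=Y and a=a and b=b] x assms(4) by auto
      finally show "snd b () y \<le> snd a () y" .
    qed
  }
  assume h: "\<forall>y\<in>car Y. snd b () y \<le> snd a () y"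
  show "q \<le> hPD Y a b" using h e DQ_refl[of q] assms(3,4) by (intro hPD_ge) auto
qed

lemma PP_eqI: "a \<in> PP_car X \<Longrightarrow> b \<in> PP_car X \<Longrightarrow> fst a = fst b \<Longrightarrow>
   (\<forall>x\<in>car X. snd a x () = snd b x ()) \<Longrightarrow> a = b"
  apply (cases a, cases b, simp)
  apply (rule ext)+
  by (metis PP_carD2 old.unit.exhaust snd_conv)

lemma PD_eqI: "a \<in> PD_car X \<Longrightarrow> b \<in> PD_car X \<Longrightarrow> fst a = fst b \<Longrightarrow>
   (\<forall>x\<in>car X. snd a () x = snd b () x) \<Longrightarrow> a = b"
  apply (cases a, cases b, simp)
  apply (rule ext)+
  by (metis PD_carD2 old.unit.exhaust snd_conv)

section \<open>Preorders\<close>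

lemma pre_DQ: "qpreordered X \<Longrightarrow> x \<in> car X \<Longrightarrow> x' \<in> car X \<Longrightarrow> pre X x x' \<in> DQ (ext X x) (ext X x')"
  by (simp add: qpreordered_def qrel_def qs_def)
lemma pre_bot: "qpreordered X \<Longrightarrow> x \<notin> car X \<or> x' \<notin> car X \<Longrightarrow> pre X x x' = bot"
  by (simp add: qpreordered_def qrel_def qs_def)
lemma pre_refl: assumes "qpreordered X" "x \<in> car X" shows "ext X x \<le> pre X x x"
proof -
  have "\<forall>x\<in>fst (qs X). \<forall>y\<in>fst (qs X). qid (qs X) x y \<le> pre X x y"
    using assms(1) unfolding qpreordered_def rle_def by blast
  hence "qid (qs X) x x \<le> pre X x x" using assms(2) by (simp add: qs_def)
  thus ?thesis using assms(2) by (simp add: qid_def qs_def)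
qed
lemma pre_trans: "qpreordered X \<Longrightarrow> x \<in> car X \<Longrightarrow> x' \<in> car X \<Longrightarrow> x'' \<in> car X \<Longrightarrow>
   qmult (rdiv (pre X x' x'') (ext X x')) (pre X x x') \<le> pre X x x''"
proof -
  assume X: "qpreordered X" and x: "x \<in> car X" "x' \<in> car X" "x'' \<in> car X"
  have "qcomp (qs X) (pre X) (pre X) x x'' \<le> pre X x x''" using X x by (simp add: qpreordered_def rle_def qs_def)
  moreover have "qmult (rdiv (pre X x' x'') (ext X x')) (pre X x x') \<le> qcomp (qs X) (pre X) (pre X) x x''"
    unfolding qcomp_def qs_def using x by (auto intro!: Sup_upper)
  ultimately show ?thesis by simp
qed

definition distA where "distA X Y \<phi> \<longleftrightarrow> (\<forall>x\<in>car X. \<forall>x'\<in>car X. \<forall>y\<in>car Y.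
   qmult (rdiv (\<phi> x' y) (ext X x')) (pre X x x') \<le> \<phi> x y)"
definition distB where "distB X Y \<phi> \<longleftrightarrow> (\<forall>x\<in>car X. \<forall>y\<in>car Y. \<forall>y'\<in>car Y.
   qmult (rdiv (pre Y y' y) (ext Y y')) (\<phi> x y') \<le> \<phi> x y)"

lemma qrel_qs: "qrel (qs X) (qs Y) \<phi> \<longleftrightarrow> (\<forall>x\<in>car X. \<forall>y\<in>car Y. \<phi> x y \<in> DQ (ext X x) (ext Y y)) \<and>
   (\<forall>x y. x \<notin> car X \<or> y \<notin> car Y \<longrightarrow> \<phi> x y = bot)"
  by (simp add: qrel_def qs_def)

lemma qdist_iff: assumes X: "qpreordered X" and Y: "qpreordered Y"
  shows "qdist X Y \<phi> \<longleftrightarrow> qrel (qs X) (qs Y) \<phi> \<and> distA X Y \<phi> \<and> distB X Y \<phi>"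
proof -
  define C where "C = qcomp (qs Y) (pre Y) \<phi>"
  have C: "\<And>x y. C x y = Sup ((\<lambda>y'. qmult (rdiv (pre Y y' y) (ext Y y')) (\<phi> x y')) ` car Y)"
    by (simp add: C_def qcomp_def qs_def)
  have D: "\<And>x y. qcomp (qs X) C (pre X) x y = Sup ((\<lambda>x'. qmult (rdiv (C x' y) (ext X x')) (pre X x x')) ` car X)"
    by (simp add: qcomp_def qs_def)
  show ?thesis
  proof
    assume h: "qdist X Y \<phi>"
    hence r: "qrel (qs X) (qs Y) \<phi>" by (simp add: qdist_def)
    have le: "\<And>x y. x \<in> car X \<Longrightarrow> y \<in> car Y \<Longrightarrow> qcomp (qs X) C (pre X) x y \<le> \<phi> x y"
      using h by (simp add: qdist_def rle_def qs_def C_def)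
    have CB: "\<And>x y y'. x \<in> car X \<Longrightarrow> y \<in> car Y \<Longrightarrow> y' \<in> car Y \<Longrightarrow>
       qmult (rdiv (pre Y y' y) (ext Y y')) (\<phi> x y') \<le> C x y"
      unfolding C by (auto intro: Sup_upper)
    have Cge: "\<And>x y. x \<in> car X \<Longrightarrow> y \<in> car Y \<Longrightarrow> \<phi> x y \<le> C x y"
      using CB le_mult_unit_rdiv pre_refl[OF Y] order_trans by blast
    have DA: "\<And>x x' y. x \<in> car X \<Longrightarrow> x' \<in> car X \<Longrightarrow> y \<in> car Y \<Longrightarrow>
       qmult (rdiv (C x' y) (ext X x')) (pre X x x') \<le> \<phi> x y"
      using le D by (metis (no_types, lifting) Sup_upper image_eqI order_trans)
    have "distA X Y \<phi>" unfolding distA_def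
      using DA Cge by (meson order_trans qmult_mono_l rdiv_mono)
    moreover have "distB X Y \<phi>" unfolding distB_def
    proof (intro ballI)
      fix x y y' assume xy: "x \<in> car X" "y \<in> car Y" "y' \<in> car Y"
      let ?t = "qmult (rdiv (pre Y y' y) (ext Y y')) (\<phi> x y')"
      have "\<phi> x y' \<in> DQ (ext X x) (ext Y y')" using r xy by (simp add: qrel_qs)
      hence "\<phi> x y' = qmult (rdiv (\<phi> x y') (ext X x)) (ext X x)" using DQ_r by metis
      hence "?t = qmult (qmult (rdiv (pre Y y' y) (ext Y y')) (rdiv (\<phi> x y') (ext X x))) (ext X x)"
        by (metis qmult_assoc)
      hence "?t \<le> qmult (rdiv (C x y) (ext X x)) (ext X x)" using le_rdiv_p CB xy by blast
      also have "\<dots> \<le> qmult (rdiv (C x y) (ext X x)) (pre X x x)"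
        by (intro qmult_mono_r pre_refl[OF X] xy)
      also have "\<dots> \<le> \<phi> x y" using DA xy by blast
      finally show "?t \<le> \<phi> x y" .
    qed
    ultimately show "qrel (qs X) (qs Y) \<phi> \<and> distA X Y \<phi> \<and> distB X Y \<phi>" using r by simp
  next
    assume h: "qrel (qs X) (qs Y) \<phi> \<and> distA X Y \<phi> \<and> distB X Y \<phi>"
    have CB: "\<And>x y. x \<in> car X \<Longrightarrow> y \<in> car Y \<Longrightarrow> C x y \<le> \<phi> x y"
      using h unfolding C distB_def by (auto intro!: Sup_least)
    have "\<And>x y. x \<in> car X \<Longrightarrow> y \<in> car Y \<Longrightarrow> qcomp (qs X) C (pre X) x y \<le> \<phi> x y"
      unfolding D
    proof (rule Sup_least, clarify)
      fix x y x' assume xy: "x \<in> car X" "y \<in> car Y" "x' \<in> car X"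
      have "qmult (rdiv (C x' y) (ext X x')) (pre X x x') \<le> qmult (rdiv (\<phi> x' y) (ext X x')) (pre X x x')"
        using CB xy by (intro qmult_mono_l rdiv_mono) auto
      also have "\<dots> \<le> \<phi> x y" using h xy by (auto simp: distA_def)
      finally show "qmult (rdiv (C x' y) (ext X x')) (pre X x x') \<le> \<phi> x y" .
    qed
    thus "qdist X Y \<phi>" using h by (simp add: qdist_def rle_def qs_def C_def)
  qed
qed


lemma PP_carI:
  assumes "\<forall>x\<in>car X. \<mu> x () \<in> DQ (ext X x) q" "\<forall>x. x \<notin> car X \<longrightarrow> \<mu> x () = bot"
    "\<forall>x\<in>car X. \<forall>x'\<in>car X. qmult (rdiv (\<mu> x' ()) (ext X x')) (pre X x x') \<le> \<mu> x ()"
  shows "(q, \<mu>) \<in> PP_car X"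
proof -
  have "qrel (qs X) (one_q q) \<mu>" using assms(1,2) by (auto simp: qrel_def qs_def)
  moreover have "rle (qs X) (one_q q) (qcomp (qs X) \<mu> (pre X)) \<mu>"
    using assms(3) by (auto simp: rle_one2 qs_def qcomp_def intro!: Sup_least)
  ultimately show ?thesis by (simp add: PP_car_def)
qed

lemma PD_carI:
  assumes "\<forall>y\<in>car Y. l () y \<in> DQ q (ext Y y)" "\<forall>y. y \<notin> car Y \<longrightarrow> l () y = bot"
    "\<forall>y\<in>car Y. \<forall>y'\<in>car Y. qmult (rdiv (pre Y y' y) (ext Y y')) (l () y') \<le> l () y"
  shows "(q, l) \<in> PD_car Y"
proof -
  have "qrel (one_q q) (qs Y) l" using assms(1,2) by (auto simp: qrel_def qs_def)
  moreover have "rle (one_q q) (qs Y) (qcomp (qs Y) (pre Y) l) l"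
    using assms(3) by (auto simp: rle_one1 qs_def qcomp_def intro!: Sup_least)
  ultimately show ?thesis by (simp add: PD_car_def)
qed

lemma dist_D: assumes X: "qpreordered X" and Y: "qpreordered Y" and "\<phi> \<in> distributors X Y"
  shows "qrel (qs X) (qs Y) \<phi>" "distA X Y \<phi>" "distB X Y \<phi>"
  using assms qdist_iff[OF X Y] by (auto simp: distributors_def)

lemma dist_I: assumes X: "qpreordered X" and Y: "qpreordered Y"
  and "qrel (qs X) (qs Y) \<phi>" "distA X Y \<phi>" "distB X Y \<phi>"
  shows "\<phi> \<in> distributors X Y"
  using assms qdist_iff[OF X Y] by (auto simp: distributors_def)

definition toPP :: "('a, 'q::quantale) qpos \<Rightarrow> ('b, 'q) qpos \<Rightarrow> ('a \<Rightarrow> 'b \<Rightarrow> 'q) \<Rightarrow> 'b \<Rightarrow> 'q \<times> ('a \<Rightarrow> unit \<Rightarrow> 'q)"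
  where "toPP X Y \<phi> = (\<lambda>y. if y \<in> car Y then (ext Y y, \<lambda>x _. \<phi> x y) else undefined)"
definition fromPP :: "('a, 'q::quantale) qpos \<Rightarrow> ('b, 'q) qpos \<Rightarrow> ('b \<Rightarrow> 'q \<times> ('a \<Rightarrow> unit \<Rightarrow> 'q)) \<Rightarrow> 'a \<Rightarrow> 'b \<Rightarrow> 'q"
  where "fromPP X Y h = (\<lambda>x y. if y \<in> car Y then snd (h y) x () else bot)"

lemma bij_b: assumes X: "qpreordered X" and Y: "qpreordered Y"
  shows "bij_betw (toPP X Y) (distributors X Y) (qmaps Y (PP X))"
proof (rule bij_betw_byWitness[where f'="fromPP X Y"])
  show "\<forall>\<phi>\<in>distributors X Y. fromPP X Y (toPP X Y \<phi>) = \<phi>"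
  proof
    fix \<phi> assume "\<phi> \<in> distributors X Y"
    from dist_D(1)[OF X Y this] show "fromPP X Y (toPP X Y \<phi>) = \<phi>"
      by (auto simp: fromPP_def toPP_def qrel_qs fun_eq_iff)
  qed
  show "\<forall>h\<in>qmaps Y (PP X). toPP X Y (fromPP X Y h) = h"
  proof
    fix h assume "h \<in> qmaps Y (PP X)"
    hence h: "qmono Y (PP X) h" by (simp add: qmaps_def)
    show "toPP X Y (fromPP X Y h) = h"
    proof
      fix y show "toPP X Y (fromPP X Y h) y = h y"
      proof (cases "y \<in> car Y")
        case True
        then have "fst (h y) = ext Y y" using h by (simp add: qmono_def)
        then show ?thesis using True by (cases "h y") (auto simp: toPP_def fromPP_def fun_eq_iff)
      next
        case False then show ?thesis using h by (simp add: qmono_def toPP_def)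
      qed
    qed
  qed
  show "toPP X Y ` distributors X Y \<subseteq> qmaps Y (PP X)"
  proof clarify
    fix \<phi> assume d: "\<phi> \<in> distributors X Y"
    note r = dist_D(1)[OF X Y d] and A = dist_D(2)[OF X Y d] and B = dist_D(3)[OF X Y d]
    have mem: "\<And>y. y \<in> car Y \<Longrightarrow> toPP X Y \<phi> y \<in> PP_car X"
      unfolding toPP_def using r A by (auto intro!: PP_carI simp: qrel_qs distA_def)
    have "\<And>y y'. y \<in> car Y \<Longrightarrow> y' \<in> car Y \<Longrightarrow> pre Y y y' \<le> hPP X (toPP X Y \<phi> y) (toPP X Y \<phi> y')"
      using pre_DQ[OF Y] B by (intro hPP_ge) (auto simp: toPP_def distB_def)
    then show "toPP X Y \<phi> \<in> qmaps Y (PP X)"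
      using mem by (auto simp: qmaps_def qmono_def pre_PP toPP_def)
  qed
  show "fromPP X Y ` qmaps Y (PP X) \<subseteq> distributors X Y"
  proof clarify
    fix h assume "h \<in> qmaps Y (PP X)"
    hence h: "qmono Y (PP X) h" by (simp add: qmaps_def)
    have hm: "\<And>y. y \<in> car Y \<Longrightarrow> h y \<in> PP_car X \<and> fst (h y) = ext Y y" using h by (simp add: qmono_def)
    show "fromPP X Y h \<in> distributors X Y"
    proof (rule dist_I[OF X Y])
      show "qrel (qs X) (qs Y) (fromPP X Y h)" unfolding qrel_qs
      proof (intro conjI allI ballI impI)
        fix x y assume xy: "x \<in> car X" "y \<in> car Y"
        then show "fromPP X Y h x y \<in> DQ (ext X x) (ext Y y)"
          using hm[OF xy(2)] PP_carD[of "h y" X x] by (simp add: fromPP_def)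
      next
        fix x y assume "x \<notin> car X \<or> y \<notin> car Y"
        then show "fromPP X Y h x y = bot"
        proof (cases "y \<in> car Y")
          case True
          with \<open>x \<notin> car X \<or> y \<notin> car Y\<close> have "x \<notin> car X" by auto
          with hm[OF True] PP_carD2[of "h y" X x "()"] show ?thesis using True by (simp add: fromPP_def)
        qed (simp add: fromPP_def)
      qed
      show "distA X Y (fromPP X Y h)"
        unfolding distA_def fromPP_def using PP_carD3[OF conjunct1[OF hm]] by simp
      show "distB X Y (fromPP X Y h)" unfolding distB_def
      proof (intro ballI)
        fix x y y' assume xy: "x \<in> car X" "y \<in> car Y" "y' \<in> car Y"
        have "pre Y y' y \<le> pre (PP X) (h y') (h y)" using h xy by (simp add: qmono_def)
        hence le: "pre Y y' y \<le> hPP X (h y') (h y)" using hm xy pre_PP by metis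
        have "qmult (rdiv (pre Y y' y) (ext Y y')) (snd (h y') x ()) \<le>
              qmult (rdiv (hPP X (h y') (h y)) (fst (h y'))) (snd (h y') x ())"
          using hm[OF xy(3)] le by (simp add: qmult_mono_l rdiv_mono)
        also have "\<dots> \<le> snd (h y) x ()" using hPP_props(2)[of "h y'" X "h y"] hm xy by auto
        finally show "qmult (rdiv (pre Y y' y) (ext Y y')) (fromPP X Y h x y') \<le> fromPP X Y h x y"
          using xy by (simp add: fromPP_def)
      qed
    qed
  qed
qed

definition toPD :: "('a, 'q::quantale) qpos \<Rightarrow> ('b, 'q) qpos \<Rightarrow> ('a \<Rightarrow> 'b \<Rightarrow> 'q) \<Rightarrow> 'a \<Rightarrow> 'q \<times> (unit \<Rightarrow> 'b \<Rightarrow> 'q)"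
  where "toPD X Y \<phi> = (\<lambda>x. if x \<in> car X then (ext X x, \<lambda>_ y. \<phi> x y) else undefined)"
definition fromPD :: "('a, 'q::quantale) qpos \<Rightarrow> ('b, 'q) qpos \<Rightarrow> ('a \<Rightarrow> 'q \<times> (unit \<Rightarrow> 'b \<Rightarrow> 'q)) \<Rightarrow> 'a \<Rightarrow> 'b \<Rightarrow> 'q"
  where "fromPD X Y h = (\<lambda>x y. if x \<in> car X then snd (h x) () y else bot)"

lemma bij_c: assumes X: "qpreordered X" and Y: "qpreordered Y"
  shows "bij_betw (toPD X Y) (distributors X Y) (qmaps X (PD Y))"
proof (rule bij_betw_byWitness[where f'="fromPD X Y"])
  show "\<forall>\<phi>\<in>distributors X Y. fromPD X Y (toPD X Y \<phi>) = \<phi>"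
  proof
    fix \<phi> assume "\<phi> \<in> distributors X Y"
    from dist_D(1)[OF X Y this] show "fromPD X Y (toPD X Y \<phi>) = \<phi>"
      by (auto simp: fromPD_def toPD_def qrel_qs fun_eq_iff)
  qed
  show "\<forall>h\<in>qmaps X (PD Y). toPD X Y (fromPD X Y h) = h"
  proof
    fix h assume "h \<in> qmaps X (PD Y)"
    hence h: "qmono X (PD Y) h" by (simp add: qmaps_def)
    show "toPD X Y (fromPD X Y h) = h"
    proof
      fix x show "toPD X Y (fromPD X Y h) x = h x"
      proof (cases "x \<in> car X")
        case True
        then have "fst (h x) = ext X x" using h by (simp add: qmono_def)
        then show ?thesis using True by (cases "h x") (auto simp: toPD_def fromPD_def fun_eq_iff)
      next
        case False then show ?thesis using h by (simp add: qmono_def toPD_def)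
      qed
    qed
  qed
  show "toPD X Y ` distributors X Y \<subseteq> qmaps X (PD Y)"
  proof clarify
    fix \<phi> assume d: "\<phi> \<in> distributors X Y"
    note r = dist_D(1)[OF X Y d] and A = dist_D(2)[OF X Y d] and B = dist_D(3)[OF X Y d]
    have mem: "\<And>x. x \<in> car X \<Longrightarrow> toPD X Y \<phi> x \<in> PD_car Y"
      unfolding toPD_def using r B by (auto intro!: PD_carI simp: qrel_qs distB_def)
    have "\<And>x x'. x \<in> car X \<Longrightarrow> x' \<in> car X \<Longrightarrow> pre X x x' \<le> hPD Y (toPD X Y \<phi> x) (toPD X Y \<phi> x')"
      using pre_DQ[OF X] A by (intro hPD_ge) (auto simp: toPD_def distA_def)
    then show "toPD X Y \<phi> \<in> qmaps X (PD Y)"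
      using mem by (auto simp: qmaps_def qmono_def pre_PD toPD_def)
  qed
  show "fromPD X Y ` qmaps X (PD Y) \<subseteq> distributors X Y"
  proof clarify
    fix h assume "h \<in> qmaps X (PD Y)"
    hence h: "qmono X (PD Y) h" by (simp add: qmaps_def)
    have hm: "\<And>x. x \<in> car X \<Longrightarrow> h x \<in> PD_car Y \<and> fst (h x) = ext X x" using h by (simp add: qmono_def)
    show "fromPD X Y h \<in> distributors X Y"
    proof (rule dist_I[OF X Y])
      show "qrel (qs X) (qs Y) (fromPD X Y h)" unfolding qrel_qs
      proof (intro conjI allI ballI impI)
        fix x y assume xy: "x \<in> car X" "y \<in> car Y"
        then show "fromPD X Y h x y \<in> DQ (ext X x) (ext Y y)"
          using hm[OF xy(1)] PD_carD[of "h x" Y y] by (simp add: fromPD_def)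
      next
        fix x y assume "x \<notin> car X \<or> y \<notin> car Y"
        then show "fromPD X Y h x y = bot"
        proof (cases "x \<in> car X")
          case True
          with \<open>x \<notin> car X \<or> y \<notin> car Y\<close> have "y \<notin> car Y" by auto
          with hm[OF True] PD_carD2[of "h x" Y y "()"] show ?thesis using True by (simp add: fromPD_def)
        qed (simp add: fromPD_def)
      qed
      show "distB X Y (fromPD X Y h)"
        unfolding distB_def fromPD_def using PD_carD3[OF conjunct1[OF hm]] by simp
      show "distA X Y (fromPD X Y h)" unfolding distA_def
      proof (intro ballI)
        fix x x' y assume xy: "x \<in> car X" "x' \<in> car X" "y \<in> car Y"
        have "pre X x x' \<le> pre (PD Y) (h x) (h x')" using h xy by (simp add: qmono_def)
        hence le: "pre X x x' \<le> hPD Y (h x) (h x')" using hm xy pre_PD by metis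
        have "qmult (rdiv (snd (h x') () y) (ext X x')) (pre X x x') \<le>
              qmult (rdiv (snd (h x') () y) (fst (h x'))) (hPD Y (h x) (h x'))"
          using hm[OF xy(2)] le by (simp add: qmult_mono_r)
        also have "\<dots> \<le> snd (h x) () y" using hPD_props(2)[where Y=Y and a="h x" and b="h x'"] xy by auto
        finally show "qmult (rdiv (fromPD X Y h x' y) (ext X x')) (pre X x x') \<le> fromPD X Y h x y"
          using xy by (simp add: fromPD_def)
      qed
    qed
  qed
qed


lemma rdiv_mult_eq: "qmult (rdiv w q) q = w \<Longrightarrow> qmult (rdiv (qmult P w) q) q = qmult P (w::'q::quantale)"
proof -
  assume w: "qmult (rdiv w q) q = w"
  have "qmult P w = qmult (qmult P (rdiv w q)) q" using w by (metis qmult_assoc)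
  hence "qmult P w \<le> qmult (rdiv (qmult P w) q) q" using le_rdiv_p by blast
  thus ?thesis using rdiv_cancel antisym by blast
qed

lemma assoc_div: "qmult (rdiv w q) q = w \<Longrightarrow> qmult q (ldiv q m) = m \<Longrightarrow>
  qmult (rdiv (qmult P w) q) m = qmult P (qmult (rdiv w q) (m::'q::quantale))"
proof -
  assume w: "qmult (rdiv w q) q = w" and m: "qmult q (ldiv q m) = m"
  have "qmult (rdiv (qmult P w) q) m = qmult (qmult P w) (ldiv q m)"
    using diag_id[OF rdiv_mult_eq[OF w] m] .
  also have "\<dots> = qmult P (qmult w (ldiv q m))" by (simp add: qmult_assoc)
  also have "\<dots> = qmult P (qmult (rdiv w q) m)" using diag_id[OF w m] by simp
  finally show ?thesis .
qed

definition yo :: "('a, 'q::quantale) qpos \<Rightarrow> 'a \<Rightarrow> 'q \<times> ('a \<Rightarrow> unit \<Rightarrow> 'q)" where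
  "yo X x = (ext X x, \<lambda>x' _. pre X x' x)"
definition yd :: "('a, 'q::quantale) qpos \<Rightarrow> 'a \<Rightarrow> 'q \<times> (unit \<Rightarrow> 'a \<Rightarrow> 'q)" where
  "yd X x = (ext X x, \<lambda>_ x'. pre X x x')"

lemma yo_mem: "qpreordered X \<Longrightarrow> x \<in> car X \<Longrightarrow> yo X x \<in> PP_car X"
  unfolding yo_def by (rule PP_carI) (simp_all add: pre_DQ pre_bot pre_trans)
lemma yd_mem: "qpreordered X \<Longrightarrow> x \<in> car X \<Longrightarrow> yd X x \<in> PD_car X"
  unfolding yd_def by (rule PD_carI) (simp_all add: pre_DQ pre_bot pre_trans)

lemma YH_PP: "a \<in> PP_car X \<Longrightarrow> x \<in> car X \<Longrightarrow> snd a x () \<le> hPP X (yo X x) a"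
  by (rule hPP_ge) (simp_all add: yo_def PP_carD PP_carD3)
lemma YH_PD: "b \<in> PD_car Y \<Longrightarrow> y \<in> car Y \<Longrightarrow> snd b () y \<le> hPD Y b (yd Y y)"
  by (rule hPD_ge) (simp_all add: yd_def PD_carD PD_carD3)

lemma yo_hom: "qpreordered X \<Longrightarrow> x \<in> car X \<Longrightarrow> x' \<in> car X \<Longrightarrow> pre X x x' \<le> hPP X (yo X x) (yo X x')"
  by (rule hPP_ge) (simp_all add: yo_def pre_DQ pre_trans)
lemma yd_hom: "qpreordered X \<Longrightarrow> x \<in> car X \<Longrightarrow> x' \<in> car X \<Longrightarrow> pre X x x' \<le> hPD X (yd X x) (yd X x')"
  by (rule hPD_ge) (simp_all add: yd_def pre_DQ pre_trans)

lemma qmonoD: "qmono A B h \<Longrightarrow> a \<in> car A \<Longrightarrow> h a \<in> car B \<and> ext B (h a) = ext A a"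
  by (simp add: qmono_def)
lemma qmonoD2: "qmono A B h \<Longrightarrow> a \<in> car A \<Longrightarrow> a' \<in> car A \<Longrightarrow> pre A a a' \<le> pre B (h a) (h a')"
  by (simp add: qmono_def)
lemma qmonoD3: "qmono A B h \<Longrightarrow> a \<notin> car A \<Longrightarrow> h a = undefined"
  by (simp add: qmono_def)

lemma mono_PP_PD: "qmono (PP X) (PD Y) f \<Longrightarrow> a \<in> PP_car X \<Longrightarrow> a' \<in> PP_car X \<Longrightarrow>
  hPP X a a' \<le> hPD Y (f a) (f a')"
proof -
  assume f: "qmono (PP X) (PD Y) f" and a: "a \<in> PP_car X" "a' \<in> PP_car X"
  have "f a \<in> PD_car Y" "f a' \<in> PD_car Y" using qmonoD[OF f] a by auto
  moreover have "pre (PP X) a a' \<le> pre (PD Y) (f a) (f a')" by (rule qmonoD2[OF f]) (use a in auto)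
  ultimately show ?thesis by (simp add: pre_PP[OF a] pre_PD)
qed
lemma mono_PD_PP: "qmono (PD Y) (PP X) f \<Longrightarrow> a \<in> PD_car Y \<Longrightarrow> a' \<in> PD_car Y \<Longrightarrow>
  hPD Y a a' \<le> hPP X (f a) (f a')"
proof -
  assume f: "qmono (PD Y) (PP X) f" and a: "a \<in> PD_car Y" "a' \<in> PD_car Y"
  have "f a \<in> PP_car X" "f a' \<in> PP_car X" using qmonoD[OF f] a by auto
  moreover have "pre (PD Y) a a' \<le> pre (PP X) (f a) (f a')" by (rule qmonoD2[OF f]) (use a in auto)
  ultimately show ?thesis by (simp add: pre_PD[OF a] pre_PP)
qed
lemma mono_PP_PP: "qmono (PP Y) (PP X) f \<Longrightarrow> a \<in> PP_car Y \<Longrightarrow> a' \<in> PP_car Y \<Longrightarrow>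
  hPP Y a a' \<le> hPP X (f a) (f a')"
proof -
  assume f: "qmono (PP Y) (PP X) f" and a: "a \<in> PP_car Y" "a' \<in> PP_car Y"
  have "f a \<in> PP_car X" "f a' \<in> PP_car X" using qmonoD[OF f] a by auto
  moreover have "pre (PP Y) a a' \<le> pre (PP X) (f a) (f a')" by (rule qmonoD2[OF f]) (use a in auto)
  ultimately show ?thesis by (simp add: pre_PP[OF a] pre_PP)
qed
lemma mono_PD_PD: "qmono (PD Y) (PD X) f \<Longrightarrow> a \<in> PD_car Y \<Longrightarrow> a' \<in> PD_car Y \<Longrightarrow>
  hPD Y a a' \<le> hPD X (f a) (f a')"
proof -
  assume f: "qmono (PD Y) (PD X) f" and a: "a \<in> PD_car Y" "a' \<in> PD_car Y"
  have "f a \<in> PD_car X" "f a' \<in> PD_car X" using qmonoD[OF f] a by auto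
  moreover have "pre (PD Y) a a' \<le> pre (PD X) (f a) (f a')" by (rule qmonoD2[OF f]) (use a in auto)
  ultimately show ?thesis by (simp add: pre_PD[OF a] pre_PD)
qed



section \<open>(d) polarities\<close>

definition UPv :: "('a,'q::quantale) qpos \<Rightarrow> ('b,'q) qpos \<Rightarrow> ('a\<Rightarrow>'b\<Rightarrow>'q) \<Rightarrow> 'q \<times> ('a \<Rightarrow> unit \<Rightarrow> 'q) \<Rightarrow> 'b \<Rightarrow> 'q" where
 "UPv X Y \<phi> a y = Sup {v\<in>DQ (fst a) (ext Y y). \<forall>x\<in>car X. qmult (rdiv v (fst a)) (snd a x ()) \<le> \<phi> x y}"
definition DNv :: "('a,'q::quantale) qpos \<Rightarrow> ('b,'q) qpos \<Rightarrow> ('a\<Rightarrow>'b\<Rightarrow>'q) \<Rightarrow> 'q \<times> (unit \<Rightarrow> 'b \<Rightarrow> 'q) \<Rightarrow> 'a \<Rightarrow> 'q" where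
 "DNv X Y \<phi> b x = Sup {u\<in>DQ (ext X x) (fst b). \<forall>y\<in>car Y. qmult (rdiv (snd b () y) (fst b)) u \<le> \<phi> x y}"

lemma UPv_props: assumes "a \<in> PP_car X"
  shows "UPv X Y \<phi> a y \<in> DQ (fst a) (ext Y y)"
    "\<forall>x\<in>car X. qmult (rdiv (UPv X Y \<phi> a y) (fst a)) (snd a x ()) \<le> \<phi> x y"
  using G1[where p="fst a" and q="ext Y y" and I="car X" and c="\<lambda>x. snd a x ()" and d="\<lambda>x. \<phi> x y"]
    PP_carD[OF assms] DQ_l unfolding UPv_def by blast+
lemma UPv_ge: "v \<in> DQ (fst a) (ext Y y) \<Longrightarrow> \<forall>x\<in>car X. qmult (rdiv v (fst a)) (snd a x ()) \<le> \<phi> x y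
  \<Longrightarrow> v \<le> UPv X Y \<phi> a y"
  unfolding UPv_def by (auto intro: Sup_upper)
lemma DNv_props:
  shows "DNv X Y \<phi> b x \<in> DQ (ext X x) (fst b)"
    "\<forall>y\<in>car Y. qmult (rdiv (snd b () y) (fst b)) (DNv X Y \<phi> b x) \<le> \<phi> x y"
  using G2[where p="ext X x" and q="fst b" and c="\<lambda>y. rdiv (snd b () y) (fst b)" and d="\<lambda>y. \<phi> x y" and I="car Y"]
  unfolding DNv_def by blast+
lemma DNv_ge: "u \<in> DQ (ext X x) (fst b) \<Longrightarrow> \<forall>y\<in>car Y. qmult (rdiv (snd b () y) (fst b)) u \<le> \<phi> x y
  \<Longrightarrow> u \<le> DNv X Y \<phi> b x"
  unfolding DNv_def by (auto intro: Sup_upper)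

lemma UPv_le: "a \<in> PP_car X \<Longrightarrow> x \<in> car X \<Longrightarrow> qmult (rdiv (UPv X Y \<phi> a y) (fst a)) (snd a x ()) \<le> \<phi> x y"
  using [[show_types]] by (rule UPv_props(2)[rule_format])
lemma DNv_le: "y \<in> car Y \<Longrightarrow> qmult (rdiv (snd b () y) (fst b)) (DNv X Y \<phi> b x) \<le> \<phi> x y"
  by (rule DNv_props(2)[rule_format])

definition upP :: "('a,'q::quantale) qpos \<Rightarrow> ('b,'q) qpos \<Rightarrow> ('a\<Rightarrow>'b\<Rightarrow>'q) \<Rightarrow> 'q \<times> ('a \<Rightarrow> unit \<Rightarrow> 'q) \<Rightarrow> 'q \<times> (unit \<Rightarrow> 'b \<Rightarrow> 'q)" where "upP X Y \<phi> = (\<lambda>a. if a \<in> PP_car X then (fst a, \<lambda>_ y. if y \<in> car Y then UPv X Y \<phi> a y else bot) else undefined)"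
definition downP :: "('a,'q::quantale) qpos \<Rightarrow> ('b,'q) qpos \<Rightarrow> ('a\<Rightarrow>'b\<Rightarrow>'q) \<Rightarrow> 'q \<times> (unit \<Rightarrow> 'b \<Rightarrow> 'q) \<Rightarrow> 'q \<times> ('a \<Rightarrow> unit \<Rightarrow> 'q)" where "downP X Y \<phi> = (\<lambda>b. if b \<in> PD_car Y then (fst b, \<lambda>x _. if x \<in> car X then DNv X Y \<phi> b x else bot) else undefined)"

lemma upP_mem: fixes X :: "('a,'q::quantale) qpos" and Y :: "('b,'q) qpos"
  assumes X: "qpreordered X" and Y: "qpreordered Y" and d: "\<phi> \<in> distributors X Y"
  and a: "a \<in> PP_car X"
  shows "upP X Y \<phi> a \<in> PD_car Y" "fst (upP X Y \<phi> a) = fst a"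
proof -
  note B = dist_D(3)[OF X Y d]
  show "fst (upP X Y \<phi> a) = fst a" using a by (simp add: upP_def)
  have "(fst a, \<lambda>_ y. if y \<in> car Y then UPv X Y \<phi> a y else bot) \<in> PD_car Y"
  proof (rule PD_carI)
    show "\<forall>y\<in>car Y. (if y \<in> car Y then UPv X Y \<phi> a y else bot) \<in> DQ (fst a) (ext Y y)"
      using UPv_props(1)[OF a, where Y=Y and \<phi>=\<phi>] by simp
    show "\<forall>y. y \<notin> car Y \<longrightarrow> (if y \<in> car Y then UPv X Y \<phi> a y else bot) = bot" by simp
    show "\<forall>y\<in>car Y. \<forall>y'\<in>car Y. qmult (rdiv (pre Y y' y) (ext Y y')) (if y' \<in> car Y then UPv X Y \<phi> a y' else bot)
        \<le> (if y \<in> car Y then UPv X Y \<phi> a y else bot)"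
    proof (intro ballI)
      fix y y' assume y: "y \<in> car Y" "y' \<in> car Y"
      let ?P = "rdiv (pre Y y' y) (ext Y y')" and ?w = "UPv X Y \<phi> a y'"
      have w: "?w \<in> DQ (fst a) (ext Y y')" by (rule UPv_props(1)[OF a])
      have "qmult ?P ?w \<le> UPv X Y \<phi> a y"
      proof (rule UPv_ge)
        show "qmult ?P ?w \<in> DQ (fst a) (ext Y y)" using DQ_comp[OF pre_DQ[OF Y y(2,1)] w] .
        show "\<forall>x\<in>car X. qmult (rdiv (qmult ?P ?w) (fst a)) (snd a x ()) \<le> \<phi> x y"
        proof
          fix x assume x: "x \<in> car X"
          have "qmult (rdiv (qmult ?P ?w) (fst a)) (snd a x ()) = qmult ?P (qmult (rdiv ?w (fst a)) (snd a x ()))"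
            using assoc_div[OF DQ_r[OF w] DQ_l[OF PP_carD[OF a x]]] .
          also have "\<dots> \<le> qmult ?P (\<phi> x y')" using UPv_le[OF a x] by (rule qmult_mono_r)
          also have "\<dots> \<le> \<phi> x y" using B x y by (auto simp: distB_def)
          finally show "qmult (rdiv (qmult ?P ?w) (fst a)) (snd a x ()) \<le> \<phi> x y" .
        qed
      qed
      thus "qmult ?P (if y' \<in> car Y then ?w else bot) \<le> (if y \<in> car Y then UPv X Y \<phi> a y else bot)"
        using y by simp
    qed
  qed
  thus "upP X Y \<phi> a \<in> PD_car Y" using a by (simp add: upP_def)
qed

lemma downP_mem: fixes X :: "('a,'q::quantale) qpos" and Y :: "('b,'q) qpos"
  assumes X: "qpreordered X" and Y: "qpreordered Y" and d: "\<phi> \<in> distributors X Y"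
  and b: "b \<in> PD_car Y"
  shows "downP X Y \<phi> b \<in> PP_car X" "fst (downP X Y \<phi> b) = fst b"
proof -
  note A = dist_D(2)[OF X Y d]
  show "fst (downP X Y \<phi> b) = fst b" using b by (simp add: downP_def)
  have "(fst b, \<lambda>x _. if x \<in> car X then DNv X Y \<phi> b x else bot) \<in> PP_car X"
  proof (rule PP_carI)
    show "\<forall>x\<in>car X. (if x \<in> car X then DNv X Y \<phi> b x else bot) \<in> DQ (ext X x) (fst b)"
      using DNv_props(1)[where X=X and Y=Y and \<phi>=\<phi> and b=b] by simp
    show "\<forall>x. x \<notin> car X \<longrightarrow> (if x \<in> car X then DNv X Y \<phi> b x else bot) = bot" by simp
    show "\<forall>x\<in>car X. \<forall>x'\<in>car X. qmult (rdiv (if x' \<in> car X then DNv X Y \<phi> b x' else bot) (ext X x')) (pre X x x')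
        \<le> (if x \<in> car X then DNv X Y \<phi> b x else bot)"
    proof (intro ballI)
      fix x x' assume x: "x \<in> car X" "x' \<in> car X"
      let ?c = "qmult (rdiv (DNv X Y \<phi> b x') (ext X x')) (pre X x x')"
      have "?c \<le> DNv X Y \<phi> b x"
      proof (rule DNv_ge)
        show "?c \<in> DQ (ext X x) (fst b)" using DQ_comp[OF DNv_props(1) pre_DQ[OF X x]] .
        show "\<forall>y\<in>car Y. qmult (rdiv (snd b () y) (fst b)) ?c \<le> \<phi> x y"
        proof
          fix y assume y: "y \<in> car Y"
          have "qmult (rdiv (snd b () y) (fst b)) ?c \<le>
             qmult (rdiv (qmult (rdiv (snd b () y) (fst b)) (DNv X Y \<phi> b x')) (ext X x')) (pre X x x')"
            unfolding qmult_assoc[symmetric] by (intro qmult_mono_l mult_rdiv_le)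
          also have "\<dots> \<le> qmult (rdiv (\<phi> x' y) (ext X x')) (pre X x x')"
            using DNv_le[OF y] by (intro qmult_mono_l rdiv_mono)
          also have "\<dots> \<le> \<phi> x y" using A x y by (auto simp: distA_def)
          finally show "qmult (rdiv (snd b () y) (fst b)) ?c \<le> \<phi> x y" .
        qed
      qed
      thus "qmult (rdiv (if x' \<in> car X then DNv X Y \<phi> b x' else bot) (ext X x')) (pre X x x')
        \<le> (if x \<in> car X then DNv X Y \<phi> b x else bot)" using x by simp
    qed
  qed
  thus "downP X Y \<phi> b \<in> PP_car X" using b by (simp add: downP_def)
qed

lemma snd_upP: "a \<in> PP_car X \<Longrightarrow> y \<in> car Y \<Longrightarrow> snd (upP X Y \<phi> a) () y = UPv X Y \<phi> a y"
  by (simp add: upP_def)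
lemma snd_downP: "b \<in> PD_car Y \<Longrightarrow> x \<in> car X \<Longrightarrow> snd (downP X Y \<phi> b) x () = DNv X Y \<phi> b x"
  by (simp add: downP_def)


lemma hPP_le: "a \<in> PP_car X \<Longrightarrow> x \<in> car X \<Longrightarrow> qmult (rdiv (hPP X a b) (fst a)) (snd a x ()) \<le> snd b x ()"
  by (rule hPP_props(2)[rule_format])
lemma hPD_le: "y \<in> car Y \<Longrightarrow> qmult (rdiv (snd b () y) (fst b)) (hPD Y a b) \<le> snd a () y"
  by (rule hPD_props(2)[rule_format])

lemma up_mono: fixes X :: "('a,'q::quantale) qpos" and Y :: "('b,'q) qpos"
  assumes X: "qpreordered X" and Y: "qpreordered Y" and d: "\<phi> \<in> distributors X Y"
  and a: "a \<in> PP_car X" and a': "a' \<in> PP_car X"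
  shows "hPP X a a' \<le> hPD Y (upP X Y \<phi> a) (upP X Y \<phi> a')"
proof (rule hPD_ge)
  let ?w = "hPP X a a'"
  have w: "?w \<in> DQ (fst a) (fst a')" by (rule hPP_props(1)[OF a])
  thus "?w \<in> DQ (fst (upP X Y \<phi> a)) (fst (upP X Y \<phi> a'))" using upP_mem(2)[OF X Y d] a a' by simp
  show "\<forall>y\<in>car Y. qmult (rdiv (snd (upP X Y \<phi> a') () y) (fst (upP X Y \<phi> a'))) ?w \<le> snd (upP X Y \<phi> a) () y"
  proof
    fix y assume y: "y \<in> car Y"
    let ?U = "rdiv (UPv X Y \<phi> a' y) (fst a')"
    have "qmult ?U ?w \<le> UPv X Y \<phi> a y"
    proof (rule UPv_ge)
      show "qmult ?U ?w \<in> DQ (fst a) (ext Y y)" by (rule DQ_comp[OF UPv_props(1)[OF a'] w])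
      show "\<forall>x\<in>car X. qmult (rdiv (qmult ?U ?w) (fst a)) (snd a x ()) \<le> \<phi> x y"
      proof
        fix x assume x: "x \<in> car X"
        have "qmult (rdiv (qmult ?U ?w) (fst a)) (snd a x ()) = qmult ?U (qmult (rdiv ?w (fst a)) (snd a x ()))"
          by (rule assoc_div[OF DQ_r[OF w] DQ_l[OF PP_carD[OF a x]]])
        also have "\<dots> \<le> qmult ?U (snd a' x ())" by (rule qmult_mono_r[OF hPP_le[OF a x]])
        also have "\<dots> \<le> \<phi> x y" by (rule UPv_le[OF a' x])
        finally show "qmult (rdiv (qmult ?U ?w) (fst a)) (snd a x ()) \<le> \<phi> x y" .
      qed
    qed
    thus "qmult (rdiv (snd (upP X Y \<phi> a') () y) (fst (upP X Y \<phi> a'))) ?w \<le> snd (upP X Y \<phi> a) () y"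
      using a a' y by (simp add: upP_def)
  qed
qed

lemma down_mono: fixes X :: "('a,'q::quantale) qpos" and Y :: "('b,'q) qpos"
  assumes X: "qpreordered X" and Y: "qpreordered Y" and d: "\<phi> \<in> distributors X Y"
  and b: "b \<in> PD_car Y" and b': "b' \<in> PD_car Y"
  shows "hPD Y b b' \<le> hPP X (downP X Y \<phi> b) (downP X Y \<phi> b')"
proof (rule hPP_ge)
  let ?w = "hPD Y b b'"
  have w: "?w \<in> DQ (fst b) (fst b')" by (rule hPD_props(1))
  thus "?w \<in> DQ (fst (downP X Y \<phi> b)) (fst (downP X Y \<phi> b'))" using downP_mem(2)[OF X Y d] b b' by simp
  show "\<forall>x\<in>car X. qmult (rdiv ?w (fst (downP X Y \<phi> b))) (snd (downP X Y \<phi> b) x ()) \<le> snd (downP X Y \<phi> b') x ()"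
  proof
    fix x assume x: "x \<in> car X"
    let ?c = "qmult (rdiv ?w (fst b)) (DNv X Y \<phi> b x)"
    have "?c \<le> DNv X Y \<phi> b' x"
    proof (rule DNv_ge)
      show "?c \<in> DQ (ext X x) (fst b')" by (rule DQ_comp[OF w DNv_props(1)])
      show "\<forall>y\<in>car Y. qmult (rdiv (snd b' () y) (fst b')) ?c \<le> \<phi> x y"
      proof
        fix y assume y: "y \<in> car Y"
        have "qmult (rdiv (snd b' () y) (fst b')) ?c \<le>
            qmult (rdiv (qmult (rdiv (snd b' () y) (fst b')) ?w) (fst b)) (DNv X Y \<phi> b x)"
          unfolding qmult_assoc[symmetric] by (intro qmult_mono_l mult_rdiv_le)
        also have "\<dots> \<le> qmult (rdiv (snd b () y) (fst b)) (DNv X Y \<phi> b x)"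
          by (intro qmult_mono_l rdiv_mono hPD_le y)
        also have "\<dots> \<le> \<phi> x y" by (rule DNv_le[OF y])
        finally show "qmult (rdiv (snd b' () y) (fst b')) ?c \<le> \<phi> x y" .
      qed
    qed
    thus "qmult (rdiv ?w (fst (downP X Y \<phi> b))) (snd (downP X Y \<phi> b) x ()) \<le> snd (downP X Y \<phi> b') x ()"
      using b b' x by (simp add: downP_def)
  qed
qed

lemma Pol_gal: fixes X :: "('a,'q::quantale) qpos" and Y :: "('b,'q) qpos"
  assumes X: "qpreordered X" and Y: "qpreordered Y" and d: "\<phi> \<in> distributors X Y"
  shows "qgalois (PP X) (PD Y) (upP X Y \<phi>) (downP X Y \<phi>)"
  unfolding qgalois_def
proof (intro conjI)
  note um = upP_mem[OF X Y d] and dm = downP_mem[OF X Y d]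
  show "qmono (PP X) (PD Y) (upP X Y \<phi>)"
    unfolding qmono_def using um up_mono[OF X Y d] by (auto simp: pre_PP pre_PD upP_def)
  show "qmono (PD Y) (PP X) (downP X Y \<phi>)"
    unfolding qmono_def using dm down_mono[OF X Y d] by (auto simp: pre_PP pre_PD downP_def)
  show "\<forall>a\<in>car (PP X). ext (PP X) a \<le> pre (PP X) a (downP X Y \<phi> (upP X Y \<phi> a))"
  proof
    fix a assume "a \<in> car (PP X)"
    hence a: "a \<in> PP_car X" by simp
    have m: "downP X Y \<phi> (upP X Y \<phi> a) \<in> PP_car X" "fst (downP X Y \<phi> (upP X Y \<phi> a)) = fst a"
      using dm[OF um(1)[OF a]] um(2)[OF a] by auto
    have "fst a \<le> hPP X a (downP X Y \<phi> (upP X Y \<phi> a))"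
    proof (subst pp_le_iff[OF a m(1) refl m(2)], intro ballI)
      fix x assume x: "x \<in> car X"
      have "snd a x () \<le> DNv X Y \<phi> (upP X Y \<phi> a) x"
      proof (rule DNv_ge)
        show "snd a x () \<in> DQ (ext X x) (fst (upP X Y \<phi> a))" using PP_carD[OF a x] um(2)[OF a] by simp
        show "\<forall>y\<in>car Y. qmult (rdiv (snd (upP X Y \<phi> a) () y) (fst (upP X Y \<phi> a))) (snd a x ()) \<le> \<phi> x y"
          using UPv_le[OF a x, where Y=Y and \<phi>=\<phi>] a by (simp add: upP_def)
      qed
      thus "snd a x () \<le> snd (downP X Y \<phi> (upP X Y \<phi> a)) x ()"
        using x um(1)[OF a] by (simp add: snd_downP)
    qed
    thus "ext (PP X) a \<le> pre (PP X) a (downP X Y \<phi> (upP X Y \<phi> a))" using a m by (simp add: pre_PP)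
  qed
  show "\<forall>b\<in>car (PD Y). ext (PD Y) b \<le> pre (PD Y) (upP X Y \<phi> (downP X Y \<phi> b)) b"
  proof
    fix b assume "b \<in> car (PD Y)"
    hence b: "b \<in> PD_car Y" by simp
    have m: "upP X Y \<phi> (downP X Y \<phi> b) \<in> PD_car Y" "fst (upP X Y \<phi> (downP X Y \<phi> b)) = fst b"
      using um[OF dm(1)[OF b]] dm(2)[OF b] by auto
    have "fst b \<le> hPD Y (upP X Y \<phi> (downP X Y \<phi> b)) b"
    proof (subst pd_le_iff[OF m(1) b m(2) refl], intro ballI)
      fix y assume y: "y \<in> car Y"
      have "snd b () y \<le> UPv X Y \<phi> (downP X Y \<phi> b) y"
      proof (rule UPv_ge)
        show "snd b () y \<in> DQ (fst (downP X Y \<phi> b)) (ext Y y)" using PD_carD[OF b y] dm(2)[OF b] by simp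
        show "\<forall>x\<in>car X. qmult (rdiv (snd b () y) (fst (downP X Y \<phi> b))) (snd (downP X Y \<phi> b) x ()) \<le> \<phi> x y"
          using DNv_le[OF y, where X=X and \<phi>=\<phi> and b=b] b by (simp add: downP_def)
      qed
      thus "snd b () y \<le> snd (upP X Y \<phi> (downP X Y \<phi> b)) () y"
        using y dm(1)[OF b] by (simp add: snd_upP)
    qed
    thus "ext (PD Y) b \<le> pre (PD Y) (upP X Y \<phi> (downP X Y \<phi> b)) b" using b m by (simp add: pre_PD)
  qed
qed


lemma Yon_UP: fixes X :: "('a,'q::quantale) qpos" and Y :: "('b,'q) qpos"
  assumes X: "qpreordered X" and Y: "qpreordered Y" and d: "\<phi> \<in> distributors X Y"
  and x: "x \<in> car X" and y: "y \<in> car Y"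
  shows "UPv X Y \<phi> (yo X x) y = \<phi> x y"
proof (rule antisym)
  have ym: "yo X x \<in> PP_car X" by (rule yo_mem[OF X x])
  have u: "UPv X Y \<phi> (yo X x) y \<in> DQ (ext X x) (ext Y y)" using UPv_props(1)[OF ym] by (simp add: yo_def)
  have "UPv X Y \<phi> (yo X x) y \<le> qmult (rdiv (UPv X Y \<phi> (yo X x) y) (ext X x)) (pre X x x)"
    by (rule le_unit_l[OF u pre_refl[OF X x]])
  also have "\<dots> \<le> \<phi> x y" using UPv_le[OF ym x, where Y=Y and \<phi>=\<phi> and y=y] by (simp add: yo_def)
  finally show "UPv X Y \<phi> (yo X x) y \<le> \<phi> x y" .
  show "\<phi> x y \<le> UPv X Y \<phi> (yo X x) y"
    using dist_D[OF X Y d] x y by (intro UPv_ge) (auto simp: yo_def qrel_qs distA_def)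
qed

lemma Yon_DN: fixes X :: "('a,'q::quantale) qpos" and Y :: "('b,'q) qpos"
  assumes X: "qpreordered X" and Y: "qpreordered Y" and d: "\<phi> \<in> distributors X Y"
  and x: "x \<in> car X" and y: "y \<in> car Y"
  shows "DNv X Y \<phi> (yd Y y) x = \<phi> x y"
proof (rule antisym)
  have u: "DNv X Y \<phi> (yd Y y) x \<in> DQ (ext X x) (ext Y y)"
    using DNv_props(1)[where X=X and Y=Y and \<phi>=\<phi> and b="yd Y y" and x=x] by (simp add: yd_def)
  have "DNv X Y \<phi> (yd Y y) x \<le> qmult (rdiv (pre Y y y) (ext Y y)) (DNv X Y \<phi> (yd Y y) x)"
    by (rule le_mult_unit_rdiv[OF pre_refl[OF Y y]])
  also have "\<dots> \<le> \<phi> x y" using DNv_le[OF y, where X=X and \<phi>=\<phi> and b="yd Y y" and x=x] by (simp add: yd_def)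
  finally show "DNv X Y \<phi> (yd Y y) x \<le> \<phi> x y" .
  show "\<phi> x y \<le> DNv X Y \<phi> (yd Y y) x"
    using dist_D[OF X Y d] x y by (intro DNv_ge) (auto simp: yd_def qrel_qs distB_def)
qed

definition fromPol :: "('a,'q::quantale) qpos \<Rightarrow> ('b,'q) qpos \<Rightarrow> ((('q \<times> ('a \<Rightarrow> unit \<Rightarrow> 'q)) \<Rightarrow> ('q \<times> (unit \<Rightarrow> 'b \<Rightarrow> 'q))) \<times> 'z) \<Rightarrow> 'a \<Rightarrow> 'b \<Rightarrow> 'q"
  where "fromPol X Y p = (\<lambda>x y. if x \<in> car X then snd (fst p (yo X x)) () y else bot)"

lemma fromPol_Pol: fixes X :: "('a,'q::quantale) qpos" and Y :: "('b,'q) qpos"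
  assumes X: "qpreordered X" and Y: "qpreordered Y" and d: "\<phi> \<in> distributors X Y"
  shows "fromPol X Y (upP X Y \<phi>, downP X Y \<phi>) = \<phi>"
proof (intro ext)
  fix x y show "fromPol X Y (upP X Y \<phi>, downP X Y \<phi>) x y = \<phi> x y"
  proof (cases "x \<in> car X \<and> y \<in> car Y")
    case True thus ?thesis using Yon_UP[OF X Y d] yo_mem[OF X] by (simp add: fromPol_def snd_upP)
  next
    case False
    have "\<phi> x y = bot" using dist_D(1)[OF X Y d] False by (auto simp: qrel_qs)
    moreover have "x \<in> car X \<Longrightarrow> snd (upP X Y \<phi> (yo X x)) () y = bot"
      using False yo_mem[OF X] by (simp add: upP_def)
    ultimately show ?thesis by (simp add: fromPol_def)
  qed
qed

locale galPD =
  fixes X :: "('a,'q::quantale) qpos" and Y :: "('b,'q) qpos" and f g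
  assumes X: "qpreordered X" and Y: "qpreordered Y" and gal: "qgalois (PP X) (PD Y) f g"
begin

lemma fq: "qmono (PP X) (PD Y) f" and gq: "qmono (PD Y) (PP X) g"
  using gal by (auto simp: qgalois_def)
lemma fm: "a \<in> PP_car X \<Longrightarrow> f a \<in> PD_car Y \<and> fst (f a) = fst a"
  using qmonoD[OF fq, of a] by simp
lemma gm: "b \<in> PD_car Y \<Longrightarrow> g b \<in> PP_car X \<and> fst (g b) = fst b"
  using qmonoD[OF gq, of b] by simp
lemma unitP: assumes a: "a \<in> PP_car X" and x: "x \<in> car X" shows "snd a x () \<le> snd (g (f a)) x ()"
proof -
  have m: "g (f a) \<in> PP_car X" "fst (g (f a)) = fst a" using gm fm a by auto
  have "fst a \<le> pre (PP X) a (g (f a))" using gal a by (auto simp: qgalois_def)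
  hence "fst a \<le> hPP X a (g (f a))" using pre_PP[OF a m(1)] by simp
  thus ?thesis using pp_le_iff[OF a m(1) refl m(2)] x by blast
qed
lemma counitP: assumes b: "b \<in> PD_car Y" and y: "y \<in> car Y" shows "snd b () y \<le> snd (f (g b)) () y"
proof -
  have m: "f (g b) \<in> PD_car Y" "fst (f (g b)) = fst b" using gm fm b by auto
  have "fst b \<le> pre (PD Y) (f (g b)) b" using gal b by (auto simp: qgalois_def)
  hence "fst b \<le> hPD Y (f (g b)) b" using pre_PD[OF m(1) b] by simp
  thus ?thesis using pd_le_iff[OF m(1) b m(2) refl] y by blast
qed

definition "\<phi> = fromPol X Y (f, g)"

lemma phi_x: "x \<in> car X \<Longrightarrow> \<phi> x y = snd (f (yo X x)) () y"
  by (simp add: \<phi>_def fromPol_def)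

lemma fyo: "x \<in> car X \<Longrightarrow> f (yo X x) \<in> PD_car Y \<and> fst (f (yo X x)) = ext X x"
  using fm yo_mem[OF X] by (simp add: yo_def)

lemma phi_dist: "\<phi> \<in> distributors X Y"
proof (rule dist_I[OF X Y])
  show "qrel (qs X) (qs Y) \<phi>" unfolding qrel_qs
  proof (intro conjI allI ballI impI)
    fix x y assume xy: "x \<in> car X" "y \<in> car Y"
    then show "\<phi> x y \<in> DQ (ext X x) (ext Y y)" using fyo[OF xy(1)] PD_carD[of "f (yo X x)" Y y] phi_x by simp
  next
    fix x y assume h: "x \<notin> car X \<or> y \<notin> car Y"
    show "\<phi> x y = bot"
    proof (cases "x \<in> car X")
      case True
      with h have "y \<notin> car Y" by auto
      with fyo[OF True] PD_carD2[of "f (yo X x)" Y y "()"] show ?thesis using True phi_x by simp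
    qed (simp add: \<phi>_def fromPol_def)
  qed
  show "distB X Y \<phi>" unfolding distB_def using PD_carD3[OF conjunct1[OF fyo]] phi_x by simp
  show "distA X Y \<phi>" unfolding distA_def
  proof (intro ballI)
    fix x x' y assume xy: "x \<in> car X" "x' \<in> car X" "y \<in> car Y"
    have "pre X x x' \<le> hPD Y (f (yo X x)) (f (yo X x'))"
      using yo_hom[OF X xy(1,2)] mono_PP_PD[OF fq yo_mem[OF X xy(1)] yo_mem[OF X xy(2)]] by (rule order_trans)
    hence "qmult (rdiv (\<phi> x' y) (ext X x')) (pre X x x') \<le>
        qmult (rdiv (snd (f (yo X x')) () y) (fst (f (yo X x')))) (hPD Y (f (yo X x)) (f (yo X x')))"
      using fyo[OF xy(2)] phi_x[OF xy(2)] by (simp add: qmult_mono_r)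
    also have "\<dots> \<le> snd (f (yo X x)) () y" by (rule hPD_le[OF xy(3)])
    finally show "qmult (rdiv (\<phi> x' y) (ext X x')) (pre X x x') \<le> \<phi> x y" using phi_x[OF xy(1)] by simp
  qed
qed

lemma g_eq: assumes b: "b \<in> PD_car Y" and x: "x \<in> car X"
  shows "snd (g b) x () = DNv X Y \<phi> b x"
proof (rule antisym)
  let ?u = "snd (g b) x ()"
  have gb: "g b \<in> PP_car X" "fst (g b) = fst b" using gm[OF b] by auto
  show "?u \<le> DNv X Y \<phi> b x"
  proof (rule DNv_ge)
    show "?u \<in> DQ (ext X x) (fst b)" using PP_carD[OF gb(1) x] gb(2) by simp
    show "\<forall>y\<in>car Y. qmult (rdiv (snd b () y) (fst b)) ?u \<le> \<phi> x y"
    proof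
      fix y assume y: "y \<in> car Y"
      have h1: "?u \<le> hPD Y (f (yo X x)) (f (g b))"
        using YH_PP[OF gb(1) x] mono_PP_PD[OF fq yo_mem[OF X x] gb(1)] by (rule order_trans)
      have "qmult (rdiv (snd b () y) (fst b)) ?u \<le> qmult (rdiv (snd (f (g b)) () y) (fst b)) ?u"
        by (intro qmult_mono_l rdiv_mono counitP[OF b y])
      also have "\<dots> \<le> qmult (rdiv (snd (f (g b)) () y) (fst b)) (hPD Y (f (yo X x)) (f (g b)))"
        by (rule qmult_mono_r[OF h1])
      also have "\<dots> = qmult (rdiv (snd (f (g b)) () y) (fst (f (g b)))) (hPD Y (f (yo X x)) (f (g b)))"
        using fm[OF gb(1)] gb(2) by simp
      also have "\<dots> \<le> snd (f (yo X x)) () y" by (rule hPD_le[OF y])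
      finally show "qmult (rdiv (snd b () y) (fst b)) ?u \<le> \<phi> x y" using phi_x[OF x] by simp
    qed
  qed
  let ?v = "DNv X Y \<phi> b x"
  have v: "?v \<in> DQ (ext X x) (fst b)" by (rule DNv_props(1))
  have "?v \<le> hPD Y (f (yo X x)) b"
  proof (rule hPD_ge)
    show "?v \<in> DQ (fst (f (yo X x))) (fst b)" using v fyo[OF x] by simp
    show "\<forall>y\<in>car Y. qmult (rdiv (snd b () y) (fst b)) ?v \<le> snd (f (yo X x)) () y"
      using DNv_le[where X=X and \<phi>=\<phi> and b=b and x=x] phi_x[OF x] by simp
  qed
  also have "\<dots> \<le> hPP X (g (f (yo X x))) (g b)" by (rule mono_PD_PP[OF gq conjunct1[OF fyo[OF x]] b])
  finally have vle: "?v \<le> hPP X (g (f (yo X x))) (g b)" .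
  have gf: "g (f (yo X x)) \<in> PP_car X" "fst (g (f (yo X x))) = ext X x" using gm fyo[OF x] by auto
  have "ext X x \<le> snd (g (f (yo X x))) x ()"
    using pre_refl[OF X x] unitP[OF yo_mem[OF X x] x] by (simp add: yo_def)
  hence "?v \<le> qmult (rdiv ?v (ext X x)) (snd (g (f (yo X x))) x ())" by (rule le_unit_l[OF v])
  also have "\<dots> \<le> qmult (rdiv (hPP X (g (f (yo X x))) (g b)) (fst (g (f (yo X x))))) (snd (g (f (yo X x))) x ())"
    using vle gf(2) by (simp add: qmult_mono_l rdiv_mono)
  also have "\<dots> \<le> ?u" by (rule hPP_le[OF gf(1) x])
  finally show "?v \<le> ?u" .
qed

lemma g_down: "g = downP X Y \<phi>"
proof
  fix b show "g b = downP X Y \<phi> b"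
  proof (cases "b \<in> PD_car Y")
    case True
    show ?thesis
      using gm[OF True] downP_mem[OF X Y phi_dist True]
      by (intro PP_eqI) (auto simp add: g_eq[OF True] snd_downP[OF True])
  next
    case False thus ?thesis using qmonoD3[OF gq, of b] by (simp add: downP_def)
  qed
qed

lemma gyd: "y \<in> car Y \<Longrightarrow> x \<in> car X \<Longrightarrow> snd (g (yd Y y)) x () = \<phi> x y"
  using g_eq[OF yd_mem[OF Y]] Yon_DN[OF X Y phi_dist] by simp

lemma f_eq: assumes a: "a \<in> PP_car X" and y: "y \<in> car Y"
  shows "snd (f a) () y = UPv X Y \<phi> a y"
proof (rule antisym)
  let ?v = "snd (f a) () y"
  have fa: "f a \<in> PD_car Y" "fst (f a) = fst a" using fm[OF a] by auto
  have ydm: "yd Y y \<in> PD_car Y" by (rule yd_mem[OF Y y])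
  have gyd': "g (yd Y y) \<in> PP_car X" "fst (g (yd Y y)) = ext Y y" using gm[OF ydm] by (auto simp: yd_def)
  show "?v \<le> UPv X Y \<phi> a y"
  proof (rule UPv_ge)
    show "?v \<in> DQ (fst a) (ext Y y)" using PD_carD[OF fa(1) y] fa(2) by simp
    show "\<forall>x\<in>car X. qmult (rdiv ?v (fst a)) (snd a x ()) \<le> \<phi> x y"
    proof
      fix x assume x: "x \<in> car X"
      have h1: "?v \<le> hPP X (g (f a)) (g (yd Y y))"
        using YH_PD[OF fa(1) y] mono_PD_PP[OF gq fa(1) ydm] by (rule order_trans)
      have "qmult (rdiv ?v (fst a)) (snd a x ()) \<le> qmult (rdiv ?v (fst a)) (snd (g (f a)) x ())"
        by (rule qmult_mono_r[OF unitP[OF a x]])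
      also have "\<dots> \<le> qmult (rdiv (hPP X (g (f a)) (g (yd Y y))) (fst a)) (snd (g (f a)) x ())"
        by (intro qmult_mono_l rdiv_mono h1)
      also have "\<dots> = qmult (rdiv (hPP X (g (f a)) (g (yd Y y))) (fst (g (f a)))) (snd (g (f a)) x ())"
        using gm[OF fa(1)] fa(2) by simp
      also have "\<dots> \<le> snd (g (yd Y y)) x ()" by (rule hPP_le[OF conjunct1[OF gm[OF fa(1)]] x])
      finally show "qmult (rdiv ?v (fst a)) (snd a x ()) \<le> \<phi> x y" using gyd[OF y x] by simp
    qed
  qed
  let ?w = "UPv X Y \<phi> a y"
  have w: "?w \<in> DQ (fst a) (ext Y y)" by (rule UPv_props(1)[OF a])
  have "?w \<le> hPP X a (g (yd Y y))"
  proof (rule hPP_ge)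
    show "?w \<in> DQ (fst a) (fst (g (yd Y y)))" using w gyd' by simp
    show "\<forall>x\<in>car X. qmult (rdiv ?w (fst a)) (snd a x ()) \<le> snd (g (yd Y y)) x ()"
      using UPv_le[OF a, where Y=Y and \<phi>=\<phi> and y=y] gyd[OF y] by simp
  qed
  also have "\<dots> \<le> hPD Y (f a) (f (g (yd Y y)))" by (rule mono_PP_PD[OF fq a gyd'(1)])
  finally have wle: "?w \<le> hPD Y (f a) (f (g (yd Y y)))" .
  have fg: "f (g (yd Y y)) \<in> PD_car Y" "fst (f (g (yd Y y))) = ext Y y" using fm[OF gyd'(1)] gyd'(2) by auto
  have "ext Y y \<le> snd (f (g (yd Y y))) () y"
    using pre_refl[OF Y y] counitP[OF ydm y] by (simp add: yd_def)
  hence "?w \<le> qmult (rdiv (snd (f (g (yd Y y))) () y) (ext Y y)) ?w" by (rule le_mult_unit_rdiv)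
  also have "\<dots> \<le> qmult (rdiv (snd (f (g (yd Y y))) () y) (fst (f (g (yd Y y))))) (hPD Y (f a) (f (g (yd Y y))))"
    using wle fg(2) by (simp add: qmult_mono_r)
  also have "\<dots> \<le> ?v" by (rule hPD_le[OF y])
  finally show "?w \<le> ?v" .
qed

lemma f_up: "f = upP X Y \<phi>"
proof
  fix a show "f a = upP X Y \<phi> a"
  proof (cases "a \<in> PP_car X")
    case True
    show ?thesis
      using fm[OF True] upP_mem[OF X Y phi_dist True]
      by (intro PD_eqI) (auto simp add: f_eq[OF True] snd_upP[OF True])
  next
    case False thus ?thesis using qmonoD3[OF fq, of a] by (simp add: upP_def)
  qed
qed

end

lemma bij_d: fixes X :: "('a,'q::quantale) qpos" and Y :: "('b,'q) qpos"
  assumes X: "qpreordered X" and Y: "qpreordered Y"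
  shows "bij_betw (\<lambda>\<phi>. (upP X Y \<phi>, downP X Y \<phi>)) (distributors X Y) (polarities X Y)"
proof (rule bij_betw_byWitness[where f'="fromPol X Y"])
  show "\<forall>\<phi>\<in>distributors X Y. fromPol X Y (upP X Y \<phi>, downP X Y \<phi>) = \<phi>"
    using fromPol_Pol[OF X Y] by blast
  show "\<forall>p\<in>polarities X Y. (upP X Y (fromPol X Y p), downP X Y (fromPol X Y p)) = p"
  proof
    fix p assume "p \<in> polarities X Y"
    then obtain f g where p: "p = (f, g)" and gal: "qgalois (PP X) (PD Y) f g"
      by (auto simp: polarities_def qgalois_set_def)
    interpret galPD X Y f g using X Y gal by unfold_locales
    show "(upP X Y (fromPol X Y p), downP X Y (fromPol X Y p)) = p"
      using f_up g_down unfolding p \<phi>_def by simp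
  qed
  show "(\<lambda>\<phi>. (upP X Y \<phi>, downP X Y \<phi>)) ` distributors X Y \<subseteq> polarities X Y"
    using Pol_gal[OF X Y] by (auto simp: polarities_def qgalois_set_def)
  show "fromPol X Y ` polarities X Y \<subseteq> distributors X Y"
  proof clarify
    fix p assume "p \<in> polarities X Y"
    then obtain f g where p: "p = (f, g)" and gal: "qgalois (PP X) (PD Y) f g"
      by (auto simp: polarities_def qgalois_set_def)
    interpret galPD X Y f g using X Y gal by unfold_locales
    show "fromPol X Y p \<in> distributors X Y" using phi_dist unfolding p \<phi>_def .
  qed
qed



section \<open>(e) axialities\<close>

lemma hPP_le': "a \<in> PP_car X \<Longrightarrow> x \<in> car X \<Longrightarrow> qmult (rdiv (hPP X a b) (fst a)) (snd a x ()) \<le> snd b x ()"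
  by (rule hPP_props(2)[rule_format])

definition COv :: "('a,'q::quantale) qpos \<Rightarrow> ('b,'q) qpos \<Rightarrow> ('a\<Rightarrow>'b\<Rightarrow>'q) \<Rightarrow> 'q \<times> ('b \<Rightarrow> unit \<Rightarrow> 'q) \<Rightarrow> 'a \<Rightarrow> 'q" where
  "COv X Y \<phi> a x = Sup ((\<lambda>y. qmult (rdiv (snd a y ()) (ext Y y)) (\<phi> x y)) ` car Y)"
definition RIv :: "('a,'q::quantale) qpos \<Rightarrow> ('b,'q) qpos \<Rightarrow> ('a\<Rightarrow>'b\<Rightarrow>'q) \<Rightarrow> 'q \<times> ('a \<Rightarrow> unit \<Rightarrow> 'q) \<Rightarrow> 'b \<Rightarrow> 'q" where
  "RIv X Y \<phi> b y = Sup {u \<in> DQ (ext Y y) (fst b). \<forall>x\<in>car X. qmult (rdiv u (ext Y y)) (\<phi> x y) \<le> snd b x ()}"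

lemma COv_ge: "y \<in> car Y \<Longrightarrow> qmult (rdiv (snd a y ()) (ext Y y)) (\<phi> x y) \<le> COv X Y \<phi> a x"
  unfolding COv_def by (rule Sup_upper) auto

lemma RIv_props: fixes X :: "('a,'q::quantale) qpos" and Y :: "('b,'q) qpos"
  assumes X: "qpreordered X" and Y: "qpreordered Y" and d: "\<phi> \<in> distributors X Y" and y: "y \<in> car Y"
  shows "RIv X Y \<phi> b y \<in> DQ (ext Y y) (fst b)" "\<forall>x\<in>car X. qmult (rdiv (RIv X Y \<phi> b y) (ext Y y)) (\<phi> x y) \<le> snd b x ()"
proof -
  have "\<forall>x\<in>car X. \<phi> x y \<in> DQ (ext X x) (ext Y y)" using dist_D(1)[OF X Y d] y by (simp add: qrel_qs)
  hence "\<forall>x\<in>car X. qmult (ext Y y) (ldiv (ext Y y) (\<phi> x y)) = \<phi> x y" using DQ_l by blast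
  from G1[where p="ext Y y" and q="fst b" and I="car X" and c="\<lambda>x. \<phi> x y" and d="\<lambda>x. snd b x ()", OF this]
  show "RIv X Y \<phi> b y \<in> DQ (ext Y y) (fst b)" "\<forall>x\<in>car X. qmult (rdiv (RIv X Y \<phi> b y) (ext Y y)) (\<phi> x y) \<le> snd b x ()"
    unfolding RIv_def by blast+
qed

lemma RIv_ge: "u \<in> DQ (ext Y y) (fst b) \<Longrightarrow> \<forall>x\<in>car X. qmult (rdiv u (ext Y y)) (\<phi> x y) \<le> snd b x () \<Longrightarrow> u \<le> RIv X Y \<phi> b y"
  unfolding RIv_def by (auto intro: Sup_upper)

definition axf :: "('a,'q::quantale) qpos \<Rightarrow> ('b,'q) qpos \<Rightarrow> ('a\<Rightarrow>'b\<Rightarrow>'q) \<Rightarrow> 'q \<times> ('b \<Rightarrow> unit \<Rightarrow> 'q) \<Rightarrow> 'q \<times> ('a \<Rightarrow> unit \<Rightarrow> 'q)" where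
  "axf X Y \<phi> = (\<lambda>a. if a \<in> PP_car Y then (fst a, \<lambda>x _. if x \<in> car X then COv X Y \<phi> a x else bot) else undefined)"
definition axg :: "('a,'q::quantale) qpos \<Rightarrow> ('b,'q) qpos \<Rightarrow> ('a\<Rightarrow>'b\<Rightarrow>'q) \<Rightarrow> 'q \<times> ('a \<Rightarrow> unit \<Rightarrow> 'q) \<Rightarrow> 'q \<times> ('b \<Rightarrow> unit \<Rightarrow> 'q)" where
  "axg X Y \<phi> = (\<lambda>b. if b \<in> PP_car X then (fst b, \<lambda>y _. if y \<in> car Y then RIv X Y \<phi> b y else bot) else undefined)"

context
  fixes X :: "('a,'q::quantale) qpos" and Y :: "('b,'q) qpos" and \<phi>
  assumes X: "qpreordered X" and Y: "qpreordered Y" and d: "\<phi> \<in> distributors X Y"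
begin

lemma phiDQ: "x \<in> car X \<Longrightarrow> y \<in> car Y \<Longrightarrow> \<phi> x y \<in> DQ (ext X x) (ext Y y)"
  using dist_D(1)[OF X Y d] by (simp add: qrel_qs)
lemma phiA: "x \<in> car X \<Longrightarrow> x' \<in> car X \<Longrightarrow> y \<in> car Y \<Longrightarrow> qmult (rdiv (\<phi> x' y) (ext X x')) (pre X x x') \<le> \<phi> x y"
  using dist_D(2)[OF X Y d] by (simp add: distA_def)
lemma phiB: "x \<in> car X \<Longrightarrow> y \<in> car Y \<Longrightarrow> y' \<in> car Y \<Longrightarrow> qmult (rdiv (pre Y y' y) (ext Y y')) (\<phi> x y') \<le> \<phi> x y"
  using dist_D(3)[OF X Y d] by (simp add: distB_def)

lemma COv_DQ: assumes a: "a \<in> PP_car Y" and x: "x \<in> car X" shows "COv X Y \<phi> a x \<in> DQ (ext X x) (fst a)"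
  unfolding COv_def using DQ_comp[OF PP_carD[OF a] phiDQ[OF x]] by (intro DQ_Sup) auto

lemma RIv_le: "y \<in> car Y \<Longrightarrow> x \<in> car X \<Longrightarrow> qmult (rdiv (RIv X Y \<phi> b y) (ext Y y)) (\<phi> x y) \<le> snd b x ()"
  using RIv_props(2)[OF X Y d] by blast

lemma axf_mem: assumes a: "a \<in> PP_car Y" shows "axf X Y \<phi> a \<in> PP_car X" "fst (axf X Y \<phi> a) = fst a"
proof -
  show "fst (axf X Y \<phi> a) = fst a" using a by (simp add: axf_def)
  have "(fst a, \<lambda>x _. if x \<in> car X then COv X Y \<phi> a x else bot) \<in> PP_car X"
  proof (rule PP_carI)
    show "\<forall>x\<in>car X. (if x \<in> car X then COv X Y \<phi> a x else bot) \<in> DQ (ext X x) (fst a)"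
      using COv_DQ[OF a] by simp
    show "\<forall>x. x \<notin> car X \<longrightarrow> (if x \<in> car X then COv X Y \<phi> a x else bot) = bot" by simp
    show "\<forall>x\<in>car X. \<forall>x'\<in>car X. qmult (rdiv (if x' \<in> car X then COv X Y \<phi> a x' else bot) (ext X x')) (pre X x x')
        \<le> (if x \<in> car X then COv X Y \<phi> a x else bot)"
    proof (intro ballI)
      fix x x' assume x: "x \<in> car X" "x' \<in> car X"
      have "qmult (rdiv (COv X Y \<phi> a x') (ext X x')) (pre X x x') = qmult (COv X Y \<phi> a x') (ldiv (ext X x') (pre X x x'))"
        by (rule diag_id[OF DQ_r[OF COv_DQ[OF a x(2)]] DQ_l[OF pre_DQ[OF X x]]])
      also have "\<dots> = Sup ((\<lambda>y. qmult (qmult (rdiv (snd a y ()) (ext Y y)) (\<phi> x' y)) (ldiv (ext X x') (pre X x x'))) ` car Y)"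
        unfolding COv_def qmult_Sup_left image_image ..
      also have "\<dots> \<le> COv X Y \<phi> a x"
      proof (rule Sup_least, clarify)
        fix y assume y: "y \<in> car Y"
        have "qmult (qmult (rdiv (snd a y ()) (ext Y y)) (\<phi> x' y)) (ldiv (ext X x') (pre X x x'))
            = qmult (rdiv (snd a y ()) (ext Y y)) (qmult (rdiv (\<phi> x' y) (ext X x')) (pre X x x'))"
          unfolding qmult_assoc using diag_id[OF DQ_r[OF phiDQ[OF x(2) y]] DQ_l[OF pre_DQ[OF X x]]] by simp
        also have "\<dots> \<le> qmult (rdiv (snd a y ()) (ext Y y)) (\<phi> x y)" by (rule qmult_mono_r[OF phiA[OF x y]])
        also have "\<dots> \<le> COv X Y \<phi> a x" by (rule COv_ge[OF y])
        finally show "qmult (qmult (rdiv (snd a y ()) (ext Y y)) (\<phi> x' y)) (ldiv (ext X x') (pre X x x')) \<le> COv X Y \<phi> a x" .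
      qed
      finally show "qmult (rdiv (if x' \<in> car X then COv X Y \<phi> a x' else bot) (ext X x')) (pre X x x')
        \<le> (if x \<in> car X then COv X Y \<phi> a x else bot)" using x by simp
    qed
  qed
  thus "axf X Y \<phi> a \<in> PP_car X" using a by (simp add: axf_def)
qed

lemma axg_mem: assumes b: "b \<in> PP_car X" shows "axg X Y \<phi> b \<in> PP_car Y" "fst (axg X Y \<phi> b) = fst b"
proof -
  show "fst (axg X Y \<phi> b) = fst b" using b by (simp add: axg_def)
  have "(fst b, \<lambda>y _. if y \<in> car Y then RIv X Y \<phi> b y else bot) \<in> PP_car Y"
  proof (rule PP_carI)
    show "\<forall>y\<in>car Y. (if y \<in> car Y then RIv X Y \<phi> b y else bot) \<in> DQ (ext Y y) (fst b)"
      using RIv_props(1)[OF X Y d] by simp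
    show "\<forall>y. y \<notin> car Y \<longrightarrow> (if y \<in> car Y then RIv X Y \<phi> b y else bot) = bot" by simp
    show "\<forall>y\<in>car Y. \<forall>y'\<in>car Y. qmult (rdiv (if y' \<in> car Y then RIv X Y \<phi> b y' else bot) (ext Y y')) (pre Y y y')
        \<le> (if y \<in> car Y then RIv X Y \<phi> b y else bot)"
    proof (intro ballI)
      fix y y' assume y: "y \<in> car Y" "y' \<in> car Y"
      let ?P = "rdiv (RIv X Y \<phi> b y') (ext Y y')"
      have "qmult ?P (pre Y y y') \<le> RIv X Y \<phi> b y"
      proof (rule RIv_ge)
        show "qmult ?P (pre Y y y') \<in> DQ (ext Y y) (fst b)"
          by (rule DQ_comp[OF RIv_props(1)[OF X Y d y(2)] pre_DQ[OF Y y]])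
        show "\<forall>x\<in>car X. qmult (rdiv (qmult ?P (pre Y y y')) (ext Y y)) (\<phi> x y) \<le> snd b x ()"
        proof
          fix x assume x: "x \<in> car X"
          have "qmult (rdiv (qmult ?P (pre Y y y')) (ext Y y)) (\<phi> x y) = qmult ?P (qmult (rdiv (pre Y y y') (ext Y y)) (\<phi> x y))"
            by (rule assoc_div[OF DQ_r[OF pre_DQ[OF Y y]] DQ_l[OF phiDQ[OF x y(1)]]])
          also have "\<dots> \<le> qmult ?P (\<phi> x y')" by (rule qmult_mono_r[OF phiB[OF x y(2,1)]])
          also have "\<dots> \<le> snd b x ()" by (rule RIv_le[OF y(2) x])
          finally show "qmult (rdiv (qmult ?P (pre Y y y')) (ext Y y)) (\<phi> x y) \<le> snd b x ()" .
        qed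
      qed
      thus "qmult (rdiv (if y' \<in> car Y then RIv X Y \<phi> b y' else bot) (ext Y y')) (pre Y y y')
        \<le> (if y \<in> car Y then RIv X Y \<phi> b y else bot)" using y by simp
    qed
  qed
  thus "axg X Y \<phi> b \<in> PP_car Y" using b by (simp add: axg_def)
qed

lemma axf_mono: assumes a: "a \<in> PP_car Y" and a': "a' \<in> PP_car Y"
  shows "hPP Y a a' \<le> hPP X (axf X Y \<phi> a) (axf X Y \<phi> a')"
proof (rule hPP_ge)
  let ?u = "hPP Y a a'"
  show "?u \<in> DQ (fst (axf X Y \<phi> a)) (fst (axf X Y \<phi> a'))"
    using hPP_props(1)[OF a] axf_mem(2)[OF a] axf_mem(2)[OF a'] by simp
  show "\<forall>x\<in>car X. qmult (rdiv ?u (fst (axf X Y \<phi> a))) (snd (axf X Y \<phi> a) x ()) \<le> snd (axf X Y \<phi> a') x ()"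
  proof
    fix x assume x: "x \<in> car X"
    have "qmult (rdiv ?u (fst a)) (COv X Y \<phi> a x) \<le> COv X Y \<phi> a' x"
      unfolding COv_def qmult_Sup_right image_image
    proof (rule Sup_least, clarify)
      fix y assume y: "y \<in> car Y"
      have "qmult (rdiv ?u (fst a)) (qmult (rdiv (snd a y ()) (ext Y y)) (\<phi> x y))
          \<le> qmult (rdiv (qmult (rdiv ?u (fst a)) (snd a y ())) (ext Y y)) (\<phi> x y)"
        unfolding qmult_assoc[symmetric] by (intro qmult_mono_l mult_rdiv_le)
      also have "\<dots> \<le> qmult (rdiv (snd a' y ()) (ext Y y)) (\<phi> x y)"
        by (intro qmult_mono_l rdiv_mono hPP_le'[OF a y])
      also have "\<dots> \<le> Sup ((\<lambda>y. qmult (rdiv (snd a' y ()) (ext Y y)) (\<phi> x y)) ` car Y)"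
        using y by (intro Sup_upper) auto
      finally show "qmult (rdiv ?u (fst a)) (qmult (rdiv (snd a y ()) (ext Y y)) (\<phi> x y))
          \<le> Sup ((\<lambda>y. qmult (rdiv (snd a' y ()) (ext Y y)) (\<phi> x y)) ` car Y)" .
    qed
    thus "qmult (rdiv ?u (fst (axf X Y \<phi> a))) (snd (axf X Y \<phi> a) x ()) \<le> snd (axf X Y \<phi> a') x ()"
      using a a' x by (simp add: axf_def)
  qed
qed

lemma axg_mono: assumes b: "b \<in> PP_car X" and b': "b' \<in> PP_car X"
  shows "hPP X b b' \<le> hPP Y (axg X Y \<phi> b) (axg X Y \<phi> b')"
proof (rule hPP_ge)
  let ?w = "hPP X b b'"
  have w: "?w \<in> DQ (fst b) (fst b')" by (rule hPP_props(1)[OF b])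
  show "?w \<in> DQ (fst (axg X Y \<phi> b)) (fst (axg X Y \<phi> b'))"
    using w axg_mem(2)[OF b] axg_mem(2)[OF b'] by simp
  show "\<forall>y\<in>car Y. qmult (rdiv ?w (fst (axg X Y \<phi> b))) (snd (axg X Y \<phi> b) y ()) \<le> snd (axg X Y \<phi> b') y ()"
  proof
    fix y assume y: "y \<in> car Y"
    let ?c = "qmult (rdiv ?w (fst b)) (RIv X Y \<phi> b y)"
    have "?c \<le> RIv X Y \<phi> b' y"
    proof (rule RIv_ge)
      show "?c \<in> DQ (ext Y y) (fst b')" by (rule DQ_comp[OF w RIv_props(1)[OF X Y d y]])
      show "\<forall>x\<in>car X. qmult (rdiv ?c (ext Y y)) (\<phi> x y) \<le> snd b' x ()"
      proof
        fix x assume x: "x \<in> car X"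
        have "qmult (rdiv ?c (ext Y y)) (\<phi> x y) = qmult (rdiv ?w (fst b)) (qmult (rdiv (RIv X Y \<phi> b y) (ext Y y)) (\<phi> x y))"
          by (rule assoc_div[OF DQ_r[OF RIv_props(1)[OF X Y d y]] DQ_l[OF phiDQ[OF x y]]])
        also have "\<dots> \<le> qmult (rdiv ?w (fst b)) (snd b x ())" by (rule qmult_mono_r[OF RIv_le[OF y x]])
        also have "\<dots> \<le> snd b' x ()" by (rule hPP_le'[OF b x])
        finally show "qmult (rdiv ?c (ext Y y)) (\<phi> x y) \<le> snd b' x ()" .
      qed
    qed
    thus "qmult (rdiv ?w (fst (axg X Y \<phi> b))) (snd (axg X Y \<phi> b) y ()) \<le> snd (axg X Y \<phi> b') y ()"
      using b b' y by (simp add: axg_def)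
  qed
qed

lemma Ax_gal: "qgalois (PP Y) (PP X) (axf X Y \<phi>) (axg X Y \<phi>)"
  unfolding qgalois_def
proof (intro conjI)
  show "qmono (PP Y) (PP X) (axf X Y \<phi>)"
    unfolding qmono_def using axf_mem axf_mono by (auto simp: pre_PP axf_def)
  show "qmono (PP X) (PP Y) (axg X Y \<phi>)"
    unfolding qmono_def using axg_mem axg_mono by (auto simp: pre_PP axg_def)
  show "\<forall>a\<in>car (PP Y). ext (PP Y) a \<le> pre (PP Y) a (axg X Y \<phi> (axf X Y \<phi> a))"
  proof
    fix a assume "a \<in> car (PP Y)"
    hence a: "a \<in> PP_car Y" by simp
    have m: "axg X Y \<phi> (axf X Y \<phi> a) \<in> PP_car Y" "fst (axg X Y \<phi> (axf X Y \<phi> a)) = fst a"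
      using axg_mem[OF axf_mem(1)[OF a]] axf_mem(2)[OF a] by auto
    have "fst a \<le> hPP Y a (axg X Y \<phi> (axf X Y \<phi> a))"
    proof (subst pp_le_iff[OF a m(1) refl m(2)], intro ballI)
      fix y assume y: "y \<in> car Y"
      have "snd a y () \<le> RIv X Y \<phi> (axf X Y \<phi> a) y"
      proof (rule RIv_ge)
        show "snd a y () \<in> DQ (ext Y y) (fst (axf X Y \<phi> a))" using PP_carD[OF a y] axf_mem(2)[OF a] by simp
        show "\<forall>x\<in>car X. qmult (rdiv (snd a y ()) (ext Y y)) (\<phi> x y) \<le> snd (axf X Y \<phi> a) x ()"
          using COv_ge[OF y, where a=a and \<phi>=\<phi> and X=X] a by (simp add: axf_def)
      qed
      thus "snd a y () \<le> snd (axg X Y \<phi> (axf X Y \<phi> a)) y ()"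
        using y axf_mem(1)[OF a] by (simp add: axg_def)
    qed
    thus "ext (PP Y) a \<le> pre (PP Y) a (axg X Y \<phi> (axf X Y \<phi> a))" using a m by (simp add: pre_PP)
  qed
  show "\<forall>b\<in>car (PP X). ext (PP X) b \<le> pre (PP X) (axf X Y \<phi> (axg X Y \<phi> b)) b"
  proof
    fix b assume "b \<in> car (PP X)"
    hence b: "b \<in> PP_car X" by simp
    have m: "axf X Y \<phi> (axg X Y \<phi> b) \<in> PP_car X" "fst (axf X Y \<phi> (axg X Y \<phi> b)) = fst b"
      using axf_mem[OF axg_mem(1)[OF b]] axg_mem(2)[OF b] by auto
    have "fst b \<le> hPP X (axf X Y \<phi> (axg X Y \<phi> b)) b"
    proof (subst pp_le_iff[OF m(1) b m(2) refl], intro ballI)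
      fix x assume x: "x \<in> car X"
      have "COv X Y \<phi> (axg X Y \<phi> b) x \<le> snd b x ()"
        unfolding COv_def
      proof (rule Sup_least, clarify)
        fix y assume y: "y \<in> car Y"
        show "qmult (rdiv (snd (axg X Y \<phi> b) y ()) (ext Y y)) (\<phi> x y) \<le> snd b x ()"
          using RIv_le[OF y x] b y by (simp add: axg_def)
      qed
      thus "snd (axf X Y \<phi> (axg X Y \<phi> b)) x () \<le> snd b x ()"
        using x axg_mem(1)[OF b] by (simp add: axf_def)
    qed
    thus "ext (PP X) b \<le> pre (PP X) (axf X Y \<phi> (axg X Y \<phi> b)) b" using b m by (simp add: pre_PP)
  qed
qed

lemma Yon_CO: assumes x: "x \<in> car X" and y: "y \<in> car Y" shows "COv X Y \<phi> (yo Y y) x = \<phi> x y"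
proof (rule antisym)
  show "COv X Y \<phi> (yo Y y) x \<le> \<phi> x y" unfolding COv_def
    using phiB[OF x y] by (auto simp: yo_def intro!: Sup_least)
  have "\<phi> x y \<le> qmult (rdiv (pre Y y y) (ext Y y)) (\<phi> x y)"
    by (rule le_mult_unit_rdiv[OF pre_refl[OF Y y]])
  also have "\<dots> \<le> COv X Y \<phi> (yo Y y) x" using COv_ge[OF y, where a="yo Y y"] by (simp add: yo_def)
  finally show "\<phi> x y \<le> COv X Y \<phi> (yo Y y) x" .
qed

end


definition fromAx :: "('a,'q::quantale) qpos \<Rightarrow> ('b,'q) qpos \<Rightarrow> ((('q \<times> ('b \<Rightarrow> unit \<Rightarrow> 'q)) \<Rightarrow> ('q \<times> ('a \<Rightarrow> unit \<Rightarrow> 'q))) \<times> 'z) \<Rightarrow> 'a \<Rightarrow> 'b \<Rightarrow> 'q"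
  where "fromAx X Y p = (\<lambda>x y. if y \<in> car Y then snd (fst p (yo Y y)) x () else bot)"

lemma fromAx_Ax: fixes X :: "('a,'q::quantale) qpos" and Y :: "('b,'q) qpos"
  assumes X: "qpreordered X" and Y: "qpreordered Y" and d: "\<phi> \<in> distributors X Y"
  shows "fromAx X Y (axf X Y \<phi>, axg X Y \<phi>) = \<phi>"
proof (intro ext)
  fix x y show "fromAx X Y (axf X Y \<phi>, axg X Y \<phi>) x y = \<phi> x y"
  proof (cases "x \<in> car X \<and> y \<in> car Y")
    case True thus ?thesis using Yon_CO[OF X Y d] yo_mem[OF Y] by (simp add: fromAx_def axf_def)
  next
    case False
    have "\<phi> x y = bot" using dist_D(1)[OF X Y d] False by (auto simp: qrel_qs)
    moreover have "y \<in> car Y \<Longrightarrow> snd (axf X Y \<phi> (yo Y y)) x () = bot"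
      using False yo_mem[OF Y] by (simp add: axf_def)
    ultimately show ?thesis by (simp add: fromAx_def)
  qed
qed

locale galAx =
  fixes X :: "('a,'q::quantale) qpos" and Y :: "('b,'q) qpos" and f g
  assumes X: "qpreordered X" and Y: "qpreordered Y" and gal: "qgalois (PP Y) (PP X) f g"
begin

lemma fq: "qmono (PP Y) (PP X) f" and gq: "qmono (PP X) (PP Y) g"
  using gal by (auto simp: qgalois_def)
lemma fm: "a \<in> PP_car Y \<Longrightarrow> f a \<in> PP_car X \<and> fst (f a) = fst a"
  using qmonoD[OF fq, of a] by simp
lemma gm: "b \<in> PP_car X \<Longrightarrow> g b \<in> PP_car Y \<and> fst (g b) = fst b"
  using qmonoD[OF gq, of b] by simp
lemma unitP: assumes a: "a \<in> PP_car Y" and y: "y \<in> car Y" shows "snd a y () \<le> snd (g (f a)) y ()"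
proof -
  have m: "g (f a) \<in> PP_car Y" "fst (g (f a)) = fst a" using gm fm a by auto
  have "fst a \<le> pre (PP Y) a (g (f a))" using gal a by (auto simp: qgalois_def)
  hence "fst a \<le> hPP Y a (g (f a))" using pre_PP[OF a m(1)] by simp
  thus ?thesis using pp_le_iff[OF a m(1) refl m(2)] y by blast
qed
lemma counitP: assumes b: "b \<in> PP_car X" and x: "x \<in> car X" shows "snd (f (g b)) x () \<le> snd b x ()"
proof -
  have m: "f (g b) \<in> PP_car X" "fst (f (g b)) = fst b" using gm fm b by auto
  have "fst b \<le> pre (PP X) (f (g b)) b" using gal b by (auto simp: qgalois_def)
  hence "fst b \<le> hPP X (f (g b)) b" using pre_PP[OF m(1) b] by simp
  thus ?thesis using pp_le_iff[OF m(1) b m(2) refl] x by blast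
qed

definition "\<phi> = fromAx X Y (f, g)"

lemma phi_y: "y \<in> car Y \<Longrightarrow> \<phi> x y = snd (f (yo Y y)) x ()"
  by (simp add: \<phi>_def fromAx_def)

lemma fyo: "y \<in> car Y \<Longrightarrow> f (yo Y y) \<in> PP_car X \<and> fst (f (yo Y y)) = ext Y y"
  using fm yo_mem[OF Y] by (simp add: yo_def)

lemma phi_dist: "\<phi> \<in> distributors X Y"
proof (rule dist_I[OF X Y])
  show "qrel (qs X) (qs Y) \<phi>" unfolding qrel_qs
  proof (intro conjI allI ballI impI)
    fix x y assume xy: "x \<in> car X" "y \<in> car Y"
    then show "\<phi> x y \<in> DQ (ext X x) (ext Y y)" using fyo[OF xy(2)] PP_carD[of "f (yo Y y)" X x] phi_y by simp
  next
    fix x y assume h: "x \<notin> car X \<or> y \<notin> car Y"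
    show "\<phi> x y = bot"
    proof (cases "y \<in> car Y")
      case True
      with h have "x \<notin> car X" by auto
      with fyo[OF True] PP_carD2[of "f (yo Y y)" X x "()"] show ?thesis using True phi_y by simp
    qed (simp add: \<phi>_def fromAx_def)
  qed
  show "distA X Y \<phi>" unfolding distA_def using PP_carD3[OF conjunct1[OF fyo]] phi_y by simp
  show "distB X Y \<phi>" unfolding distB_def
  proof (intro ballI)
    fix x y y' assume xy: "x \<in> car X" "y \<in> car Y" "y' \<in> car Y"
    have "pre Y y' y \<le> hPP X (f (yo Y y')) (f (yo Y y))"
      using yo_hom[OF Y xy(3,2)] mono_PP_PP[OF fq yo_mem[OF Y xy(3)] yo_mem[OF Y xy(2)]] by (rule order_trans)
    hence "qmult (rdiv (pre Y y' y) (ext Y y')) (\<phi> x y') \<le>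
        qmult (rdiv (hPP X (f (yo Y y')) (f (yo Y y))) (fst (f (yo Y y')))) (snd (f (yo Y y')) x ())"
      using fyo[OF xy(3)] phi_y[OF xy(3)] by (simp add: qmult_mono_l rdiv_mono)
    also have "\<dots> \<le> snd (f (yo Y y)) x ()" by (rule hPP_le'[OF conjunct1[OF fyo[OF xy(3)]] xy(1)])
    finally show "qmult (rdiv (pre Y y' y) (ext Y y')) (\<phi> x y') \<le> \<phi> x y" using phi_y[OF xy(2)] by simp
  qed
qed

lemma g_eq: assumes b: "b \<in> PP_car X" and y: "y \<in> car Y"
  shows "snd (g b) y () = RIv X Y \<phi> b y"
proof (rule antisym)
  let ?u = "snd (g b) y ()"
  have gb: "g b \<in> PP_car Y" "fst (g b) = fst b" using gm[OF b] by auto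
  show "?u \<le> RIv X Y \<phi> b y"
  proof (rule RIv_ge)
    show "?u \<in> DQ (ext Y y) (fst b)" using PP_carD[OF gb(1) y] gb(2) by simp
    show "\<forall>x\<in>car X. qmult (rdiv ?u (ext Y y)) (\<phi> x y) \<le> snd b x ()"
    proof
      fix x assume x: "x \<in> car X"
      have h1: "?u \<le> hPP X (f (yo Y y)) (f (g b))"
        using YH_PP[OF gb(1) y] mono_PP_PP[OF fq yo_mem[OF Y y] gb(1)] by (rule order_trans)
      have "qmult (rdiv ?u (ext Y y)) (\<phi> x y) \<le> qmult (rdiv (hPP X (f (yo Y y)) (f (g b))) (ext Y y)) (\<phi> x y)"
        by (intro qmult_mono_l rdiv_mono h1)
      also have "\<dots> = qmult (rdiv (hPP X (f (yo Y y)) (f (g b))) (fst (f (yo Y y)))) (snd (f (yo Y y)) x ())"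
        using fyo[OF y] phi_y[OF y] by simp
      also have "\<dots> \<le> snd (f (g b)) x ()" by (rule hPP_le'[OF conjunct1[OF fyo[OF y]] x])
      also have "\<dots> \<le> snd b x ()" by (rule counitP[OF b x])
      finally show "qmult (rdiv ?u (ext Y y)) (\<phi> x y) \<le> snd b x ()" .
    qed
  qed
  let ?v = "RIv X Y \<phi> b y"
  have v: "?v \<in> DQ (ext Y y) (fst b)" by (rule RIv_props(1)[OF X Y phi_dist y])
  have "?v \<le> hPP X (f (yo Y y)) b"
  proof (rule hPP_ge)
    show "?v \<in> DQ (fst (f (yo Y y))) (fst b)" using v fyo[OF y] by simp
    show "\<forall>x\<in>car X. qmult (rdiv ?v (fst (f (yo Y y)))) (snd (f (yo Y y)) x ()) \<le> snd b x ()"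
      using RIv_le[OF X Y phi_dist y] phi_y[OF y] fyo[OF y] by simp
  qed
  also have "\<dots> \<le> hPP Y (g (f (yo Y y))) (g b)" by (rule mono_PP_PP[OF gq conjunct1[OF fyo[OF y]] b])
  finally have vle: "?v \<le> hPP Y (g (f (yo Y y))) (g b)" .
  have gf: "g (f (yo Y y)) \<in> PP_car Y" "fst (g (f (yo Y y))) = ext Y y" using gm fyo[OF y] by auto
  have "ext Y y \<le> snd (g (f (yo Y y))) y ()"
    using pre_refl[OF Y y] unitP[OF yo_mem[OF Y y] y] by (simp add: yo_def)
  hence "?v \<le> qmult (rdiv ?v (ext Y y)) (snd (g (f (yo Y y))) y ())" by (rule le_unit_l[OF v])
  also have "\<dots> \<le> qmult (rdiv (hPP Y (g (f (yo Y y))) (g b)) (fst (g (f (yo Y y))))) (snd (g (f (yo Y y))) y ())"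
    using vle gf(2) by (simp add: qmult_mono_l rdiv_mono)
  also have "\<dots> \<le> ?u" by (rule hPP_le'[OF gf(1) y])
  finally show "?v \<le> ?u" .
qed

lemma g_ax: "g = axg X Y \<phi>"
proof
  fix b show "g b = axg X Y \<phi> b"
  proof (cases "b \<in> PP_car X")
    case True
    show ?thesis
      using gm[OF True] axg_mem[OF X Y phi_dist True]
      by (intro PP_eqI) (auto simp add: g_eq[OF True] axg_def True)
  next
    case False thus ?thesis using qmonoD3[OF gq, of b] by (simp add: axg_def)
  qed
qed

lemma f_eq: assumes a: "a \<in> PP_car Y" and x: "x \<in> car X"
  shows "snd (f a) x () = COv X Y \<phi> a x"
proof (rule antisym)
  have fa: "f a \<in> PP_car X" "fst (f a) = fst a" using fm[OF a] by auto
  show "COv X Y \<phi> a x \<le> snd (f a) x ()" unfolding COv_def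
  proof (rule Sup_least, clarify)
    fix y assume y: "y \<in> car Y"
    have "snd a y () \<le> hPP X (f (yo Y y)) (f a)"
      using YH_PP[OF a y] mono_PP_PP[OF fq yo_mem[OF Y y] a] by (rule order_trans)
    hence "qmult (rdiv (snd a y ()) (ext Y y)) (\<phi> x y) \<le>
        qmult (rdiv (hPP X (f (yo Y y)) (f a)) (fst (f (yo Y y)))) (snd (f (yo Y y)) x ())"
      using fyo[OF y] phi_y[OF y] by (simp add: qmult_mono_l rdiv_mono)
    also have "\<dots> \<le> snd (f a) x ()" by (rule hPP_le'[OF conjunct1[OF fyo[OF y]] x])
    finally show "qmult (rdiv (snd a y ()) (ext Y y)) (\<phi> x y) \<le> snd (f a) x ()" .
  qed
  define c where "c = axf X Y \<phi> a"
  have c: "c \<in> PP_car X" "fst c = fst a" using axf_mem[OF X Y phi_dist a] by (auto simp: c_def)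
  have gc: "g c \<in> PP_car Y" "fst (g c) = fst a" using gm[OF c(1)] c(2) by auto
  have "fst a \<le> hPP Y a (g c)"
  proof (subst pp_le_iff[OF a gc(1) refl gc(2)], intro ballI)
    fix y assume y: "y \<in> car Y"
    have "snd a y () \<le> RIv X Y \<phi> c y"
    proof (rule RIv_ge)
      show "snd a y () \<in> DQ (ext Y y) (fst c)" using PP_carD[OF a y] c(2) by simp
      show "\<forall>x\<in>car X. qmult (rdiv (snd a y ()) (ext Y y)) (\<phi> x y) \<le> snd c x ()"
        using COv_ge[OF y, where a=a and \<phi>=\<phi> and X=X] a by (simp add: c_def axf_def)
    qed
    thus "snd a y () \<le> snd (g c) y ()" using g_eq[OF c(1) y] by simp
  qed
  also have "\<dots> \<le> hPP X (f a) (f (g c))" by (rule mono_PP_PP[OF fq a gc(1)])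
  finally have "fst a \<le> hPP X (f a) (f (g c))" .
  moreover have fgc: "f (g c) \<in> PP_car X" "fst (f (g c)) = fst a" using fm[OF gc(1)] gc(2) by auto
  ultimately have "snd (f a) x () \<le> snd (f (g c)) x ()" using pp_le_iff[OF fa(1) fgc(1) fa(2) fgc(2)] x by blast
  also have "\<dots> \<le> snd c x ()" by (rule counitP[OF c(1) x])
  also have "\<dots> = COv X Y \<phi> a x" using a x by (simp add: c_def axf_def)
  finally show "snd (f a) x () \<le> COv X Y \<phi> a x" .
qed

lemma f_ax: "f = axf X Y \<phi>"
proof
  fix a show "f a = axf X Y \<phi> a"
  proof (cases "a \<in> PP_car Y")
    case True
    show ?thesis
      using fm[OF True] axf_mem[OF X Y phi_dist True]
      by (intro PP_eqI) (auto simp add: f_eq[OF True] axf_def True)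
  next
    case False thus ?thesis using qmonoD3[OF fq, of a] by (simp add: axf_def)
  qed
qed

end

lemma bij_e: fixes X :: "('a,'q::quantale) qpos" and Y :: "('b,'q) qpos"
  assumes X: "qpreordered X" and Y: "qpreordered Y"
  shows "bij_betw (\<lambda>\<phi>. (axf X Y \<phi>, axg X Y \<phi>)) (distributors X Y) (axialities Y X)"
proof (rule bij_betw_byWitness[where f'="fromAx X Y"])
  show "\<forall>\<phi>\<in>distributors X Y. fromAx X Y (axf X Y \<phi>, axg X Y \<phi>) = \<phi>"
    using fromAx_Ax[OF X Y] by blast
  show "\<forall>p\<in>axialities Y X. (axf X Y (fromAx X Y p), axg X Y (fromAx X Y p)) = p"
  proof
    fix p assume "p \<in> axialities Y X"
    then obtain f g where p: "p = (f, g)" and gal: "qgalois (PP Y) (PP X) f g"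
      by (auto simp: axialities_def qgalois_set_def)
    interpret galAx X Y f g using X Y gal by unfold_locales
    show "(axf X Y (fromAx X Y p), axg X Y (fromAx X Y p)) = p"
      using f_ax g_ax unfolding p \<phi>_def by simp
  qed
  show "(\<lambda>\<phi>. (axf X Y \<phi>, axg X Y \<phi>)) ` distributors X Y \<subseteq> axialities Y X"
    using Ax_gal[OF X Y] by (auto simp: axialities_def qgalois_set_def)
  show "fromAx X Y ` axialities Y X \<subseteq> distributors X Y"
  proof clarify
    fix p assume "p \<in> axialities Y X"
    then obtain f g where p: "p = (f, g)" and gal: "qgalois (PP Y) (PP X) f g"
      by (auto simp: axialities_def qgalois_set_def)
    interpret galAx X Y f g using X Y gal by unfold_locales
    show "fromAx X Y p \<in> distributors X Y" using phi_dist unfolding p \<phi>_def .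
  qed
qed



section \<open>(f) dual axialities\<close>

lemma hPD_le': "y \<in> car Y \<Longrightarrow> qmult (rdiv (snd b () y) (fst b)) (hPD Y a b) \<le> snd a () y"
  by (rule hPD_props(2)[rule_format])

definition COd :: "('a,'q::quantale) qpos \<Rightarrow> ('b,'q) qpos \<Rightarrow> ('a\<Rightarrow>'b\<Rightarrow>'q) \<Rightarrow> 'q \<times> (unit \<Rightarrow> 'a \<Rightarrow> 'q) \<Rightarrow> 'b \<Rightarrow> 'q" where
  "COd X Y \<phi> k y = Sup ((\<lambda>x. qmult (rdiv (\<phi> x y) (ext X x)) (snd k () x)) ` car X)"
definition RId :: "('a,'q::quantale) qpos \<Rightarrow> ('b,'q) qpos \<Rightarrow> ('a\<Rightarrow>'b\<Rightarrow>'q) \<Rightarrow> 'q \<times> (unit \<Rightarrow> 'b \<Rightarrow> 'q) \<Rightarrow> 'a \<Rightarrow> 'q" where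
  "RId X Y \<phi> l x = Sup {u \<in> DQ (fst l) (ext X x). \<forall>y\<in>car Y. qmult (rdiv (\<phi> x y) (ext X x)) u \<le> snd l () y}"

lemma COd_ge: "x \<in> car X \<Longrightarrow> qmult (rdiv (\<phi> x y) (ext X x)) (snd k () x) \<le> COd X Y \<phi> k y"
  unfolding COd_def by (rule Sup_upper) auto

lemma RId_props:
  shows "RId X Y \<phi> l x \<in> DQ (fst l) (ext X x)" "\<forall>y\<in>car Y. qmult (rdiv (\<phi> x y) (ext X x)) (RId X Y \<phi> l x) \<le> snd l () y"
  using G2[where p="fst l" and q="ext X x" and c="\<lambda>y. rdiv (\<phi> x y) (ext X x)" and d="\<lambda>y. snd l () y" and I="car Y"]
  unfolding RId_def by blast+
lemma RId_le: "y \<in> car Y \<Longrightarrow> qmult (rdiv (\<phi> x y) (ext X x)) (RId X Y \<phi> l x) \<le> snd l () y"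
  by (rule RId_props(2)[rule_format])
lemma RId_ge: "u \<in> DQ (fst l) (ext X x) \<Longrightarrow> \<forall>y\<in>car Y. qmult (rdiv (\<phi> x y) (ext X x)) u \<le> snd l () y \<Longrightarrow> u \<le> RId X Y \<phi> l x"
  unfolding RId_def by (auto intro: Sup_upper)

definition dxf :: "('a,'q::quantale) qpos \<Rightarrow> ('b,'q) qpos \<Rightarrow> ('a\<Rightarrow>'b\<Rightarrow>'q) \<Rightarrow> 'q \<times> (unit \<Rightarrow> 'b \<Rightarrow> 'q) \<Rightarrow> 'q \<times> (unit \<Rightarrow> 'a \<Rightarrow> 'q)" where
  "dxf X Y \<phi> = (\<lambda>l. if l \<in> PD_car Y then (fst l, \<lambda>_ x. if x \<in> car X then RId X Y \<phi> l x else bot) else undefined)"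
definition dxg :: "('a,'q::quantale) qpos \<Rightarrow> ('b,'q) qpos \<Rightarrow> ('a\<Rightarrow>'b\<Rightarrow>'q) \<Rightarrow> 'q \<times> (unit \<Rightarrow> 'a \<Rightarrow> 'q) \<Rightarrow> 'q \<times> (unit \<Rightarrow> 'b \<Rightarrow> 'q)" where
  "dxg X Y \<phi> = (\<lambda>k. if k \<in> PD_car X then (fst k, \<lambda>_ y. if y \<in> car Y then COd X Y \<phi> k y else bot) else undefined)"

context
  fixes X :: "('a,'q::quantale) qpos" and Y :: "('b,'q) qpos" and \<phi>
  assumes X: "qpreordered X" and Y: "qpreordered Y" and d: "\<phi> \<in> distributors X Y"
begin

lemma dphiDQ: "x \<in> car X \<Longrightarrow> y \<in> car Y \<Longrightarrow> \<phi> x y \<in> DQ (ext X x) (ext Y y)"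
  using dist_D(1)[OF X Y d] by (simp add: qrel_qs)
lemma dphiA: "x \<in> car X \<Longrightarrow> x' \<in> car X \<Longrightarrow> y \<in> car Y \<Longrightarrow> qmult (rdiv (\<phi> x' y) (ext X x')) (pre X x x') \<le> \<phi> x y"
  using dist_D(2)[OF X Y d] by (simp add: distA_def)
lemma dphiB: "x \<in> car X \<Longrightarrow> y \<in> car Y \<Longrightarrow> y' \<in> car Y \<Longrightarrow> qmult (rdiv (pre Y y' y) (ext Y y')) (\<phi> x y') \<le> \<phi> x y"
  using dist_D(3)[OF X Y d] by (simp add: distB_def)

lemma COd_DQ: assumes k: "k \<in> PD_car X" and y: "y \<in> car Y" shows "COd X Y \<phi> k y \<in> DQ (fst k) (ext Y y)"
  unfolding COd_def using DQ_comp[OF dphiDQ[OF _ y] PD_carD[OF k]] by (intro DQ_Sup) auto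

lemma dxf_mem: assumes l: "l \<in> PD_car Y" shows "dxf X Y \<phi> l \<in> PD_car X" "fst (dxf X Y \<phi> l) = fst l"
proof -
  show "fst (dxf X Y \<phi> l) = fst l" using l by (simp add: dxf_def)
  have "(fst l, \<lambda>_ x. if x \<in> car X then RId X Y \<phi> l x else bot) \<in> PD_car X"
  proof (rule PD_carI)
    show "\<forall>x\<in>car X. (if x \<in> car X then RId X Y \<phi> l x else bot) \<in> DQ (fst l) (ext X x)"
      using RId_props(1)[where X=X and Y=Y and \<phi>=\<phi> and l=l] by simp
    show "\<forall>x. x \<notin> car X \<longrightarrow> (if x \<in> car X then RId X Y \<phi> l x else bot) = bot" by simp
    show "\<forall>x\<in>car X. \<forall>x'\<in>car X. qmult (rdiv (pre X x' x) (ext X x')) (if x' \<in> car X then RId X Y \<phi> l x' else bot)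
        \<le> (if x \<in> car X then RId X Y \<phi> l x else bot)"
    proof (intro ballI)
      fix x x' assume x: "x \<in> car X" "x' \<in> car X"
      let ?c = "qmult (rdiv (pre X x' x) (ext X x')) (RId X Y \<phi> l x')"
      have "?c \<le> RId X Y \<phi> l x"
      proof (rule RId_ge)
        show "?c \<in> DQ (fst l) (ext X x)" by (rule DQ_comp[OF pre_DQ[OF X x(2,1)] RId_props(1)])
        show "\<forall>y\<in>car Y. qmult (rdiv (\<phi> x y) (ext X x)) ?c \<le> snd l () y"
        proof
          fix y assume y: "y \<in> car Y"
          have "qmult (rdiv (\<phi> x y) (ext X x)) ?c \<le>
              qmult (rdiv (qmult (rdiv (\<phi> x y) (ext X x)) (pre X x' x)) (ext X x')) (RId X Y \<phi> l x')"
            unfolding qmult_assoc[symmetric] by (intro qmult_mono_l mult_rdiv_le)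
          also have "\<dots> \<le> qmult (rdiv (\<phi> x' y) (ext X x')) (RId X Y \<phi> l x')"
            by (intro qmult_mono_l rdiv_mono dphiA x y)
          also have "\<dots> \<le> snd l () y" by (rule RId_le[OF y])
          finally show "qmult (rdiv (\<phi> x y) (ext X x)) ?c \<le> snd l () y" .
        qed
      qed
      thus "qmult (rdiv (pre X x' x) (ext X x')) (if x' \<in> car X then RId X Y \<phi> l x' else bot)
        \<le> (if x \<in> car X then RId X Y \<phi> l x else bot)" using x by simp
    qed
  qed
  thus "dxf X Y \<phi> l \<in> PD_car X" using l by (simp add: dxf_def)
qed

lemma dxg_mem: assumes k: "k \<in> PD_car X" shows "dxg X Y \<phi> k \<in> PD_car Y" "fst (dxg X Y \<phi> k) = fst k"
proof -
  show "fst (dxg X Y \<phi> k) = fst k" using k by (simp add: dxg_def)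
  have "(fst k, \<lambda>_ y. if y \<in> car Y then COd X Y \<phi> k y else bot) \<in> PD_car Y"
  proof (rule PD_carI)
    show "\<forall>y\<in>car Y. (if y \<in> car Y then COd X Y \<phi> k y else bot) \<in> DQ (fst k) (ext Y y)"
      using COd_DQ[OF k] by simp
    show "\<forall>y. y \<notin> car Y \<longrightarrow> (if y \<in> car Y then COd X Y \<phi> k y else bot) = bot" by simp
    show "\<forall>y\<in>car Y. \<forall>y'\<in>car Y. qmult (rdiv (pre Y y' y) (ext Y y')) (if y' \<in> car Y then COd X Y \<phi> k y' else bot)
        \<le> (if y \<in> car Y then COd X Y \<phi> k y else bot)"
    proof (intro ballI)
      fix y y' assume y: "y \<in> car Y" "y' \<in> car Y"
      have "qmult (rdiv (pre Y y' y) (ext Y y')) (COd X Y \<phi> k y') \<le> COd X Y \<phi> k y"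
        unfolding COd_def qmult_Sup_right image_image
      proof (rule Sup_least, clarify)
        fix x assume x: "x \<in> car X"
        have "qmult (rdiv (pre Y y' y) (ext Y y')) (qmult (rdiv (\<phi> x y') (ext X x)) (snd k () x))
            \<le> qmult (rdiv (qmult (rdiv (pre Y y' y) (ext Y y')) (\<phi> x y')) (ext X x)) (snd k () x)"
          unfolding qmult_assoc[symmetric] by (intro qmult_mono_l mult_rdiv_le)
        also have "\<dots> \<le> qmult (rdiv (\<phi> x y) (ext X x)) (snd k () x)"
          by (intro qmult_mono_l rdiv_mono dphiB x y)
        also have "\<dots> \<le> Sup ((\<lambda>x. qmult (rdiv (\<phi> x y) (ext X x)) (snd k () x)) ` car X)"
          using x by (intro Sup_upper) auto
        finally show "qmult (rdiv (pre Y y' y) (ext Y y')) (qmult (rdiv (\<phi> x y') (ext X x)) (snd k () x))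
            \<le> Sup ((\<lambda>x. qmult (rdiv (\<phi> x y) (ext X x)) (snd k () x)) ` car X)" .
      qed
      thus "qmult (rdiv (pre Y y' y) (ext Y y')) (if y' \<in> car Y then COd X Y \<phi> k y' else bot)
        \<le> (if y \<in> car Y then COd X Y \<phi> k y else bot)" using y by simp
    qed
  qed
  thus "dxg X Y \<phi> k \<in> PD_car Y" using k by (simp add: dxg_def)
qed

lemma dxf_mono: assumes l: "l \<in> PD_car Y" and l': "l' \<in> PD_car Y"
  shows "hPD Y l l' \<le> hPD X (dxf X Y \<phi> l) (dxf X Y \<phi> l')"
proof (rule hPD_ge)
  let ?w = "hPD Y l l'"
  have w: "?w \<in> DQ (fst l) (fst l')" by (rule hPD_props(1))
  show "?w \<in> DQ (fst (dxf X Y \<phi> l)) (fst (dxf X Y \<phi> l'))" using w dxf_mem(2)[OF l] dxf_mem(2)[OF l'] by simp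
  show "\<forall>x\<in>car X. qmult (rdiv (snd (dxf X Y \<phi> l') () x) (fst (dxf X Y \<phi> l'))) ?w \<le> snd (dxf X Y \<phi> l) () x"
  proof
    fix x assume x: "x \<in> car X"
    let ?c = "qmult (rdiv (RId X Y \<phi> l' x) (fst l')) ?w"
    have "?c \<le> RId X Y \<phi> l x"
    proof (rule RId_ge)
      show "?c \<in> DQ (fst l) (ext X x)" by (rule DQ_comp[OF RId_props(1) w])
      show "\<forall>y\<in>car Y. qmult (rdiv (\<phi> x y) (ext X x)) ?c \<le> snd l () y"
      proof
        fix y assume y: "y \<in> car Y"
        have "qmult (rdiv (\<phi> x y) (ext X x)) ?c \<le>
            qmult (rdiv (qmult (rdiv (\<phi> x y) (ext X x)) (RId X Y \<phi> l' x)) (fst l')) ?w"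
          unfolding qmult_assoc[symmetric] by (intro qmult_mono_l mult_rdiv_le)
        also have "\<dots> \<le> qmult (rdiv (snd l' () y) (fst l')) ?w"
          by (intro qmult_mono_l rdiv_mono RId_le y)
        also have "\<dots> \<le> snd l () y" by (rule hPD_le'[OF y])
        finally show "qmult (rdiv (\<phi> x y) (ext X x)) ?c \<le> snd l () y" .
      qed
    qed
    thus "qmult (rdiv (snd (dxf X Y \<phi> l') () x) (fst (dxf X Y \<phi> l'))) ?w \<le> snd (dxf X Y \<phi> l) () x"
      using l l' x by (simp add: dxf_def)
  qed
qed

lemma dxg_mono: assumes k: "k \<in> PD_car X" and k': "k' \<in> PD_car X"
  shows "hPD X k k' \<le> hPD Y (dxg X Y \<phi> k) (dxg X Y \<phi> k')"
proof (rule hPD_ge)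
  let ?w = "hPD X k k'"
  have w: "?w \<in> DQ (fst k) (fst k')" by (rule hPD_props(1))
  show "?w \<in> DQ (fst (dxg X Y \<phi> k)) (fst (dxg X Y \<phi> k'))" using w dxg_mem(2)[OF k] dxg_mem(2)[OF k'] by simp
  show "\<forall>y\<in>car Y. qmult (rdiv (snd (dxg X Y \<phi> k') () y) (fst (dxg X Y \<phi> k'))) ?w \<le> snd (dxg X Y \<phi> k) () y"
  proof
    fix y assume y: "y \<in> car Y"
    have "qmult (rdiv (COd X Y \<phi> k' y) (fst k')) ?w = qmult (COd X Y \<phi> k' y) (ldiv (fst k') ?w)"
      by (rule diag_id[OF DQ_r[OF COd_DQ[OF k' y]] DQ_l[OF w]])
    also have "\<dots> = Sup ((\<lambda>x. qmult (qmult (rdiv (\<phi> x y) (ext X x)) (snd k' () x)) (ldiv (fst k') ?w)) ` car X)"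
      unfolding COd_def qmult_Sup_left image_image ..
    also have "\<dots> \<le> COd X Y \<phi> k y"
    proof (rule Sup_least, clarify)
      fix x assume x: "x \<in> car X"
      have "qmult (qmult (rdiv (\<phi> x y) (ext X x)) (snd k' () x)) (ldiv (fst k') ?w)
          = qmult (rdiv (\<phi> x y) (ext X x)) (qmult (rdiv (snd k' () x) (fst k')) ?w)"
        unfolding qmult_assoc using diag_id[OF DQ_r[OF PD_carD[OF k' x]] DQ_l[OF w]] by simp
      also have "\<dots> \<le> qmult (rdiv (\<phi> x y) (ext X x)) (snd k () x)" by (rule qmult_mono_r[OF hPD_le'[OF x]])
      also have "\<dots> \<le> COd X Y \<phi> k y" by (rule COd_ge[OF x])
      finally show "qmult (qmult (rdiv (\<phi> x y) (ext X x)) (snd k' () x)) (ldiv (fst k') ?w) \<le> COd X Y \<phi> k y" .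
    qed
    finally show "qmult (rdiv (snd (dxg X Y \<phi> k') () y) (fst (dxg X Y \<phi> k'))) ?w \<le> snd (dxg X Y \<phi> k) () y"
      using k k' y by (simp add: dxg_def)
  qed
qed

lemma Dx_gal: "qgalois (PD Y) (PD X) (dxf X Y \<phi>) (dxg X Y \<phi>)"
  unfolding qgalois_def
proof (intro conjI)
  show "qmono (PD Y) (PD X) (dxf X Y \<phi>)"
    unfolding qmono_def using dxf_mem dxf_mono by (auto simp: pre_PD dxf_def)
  show "qmono (PD X) (PD Y) (dxg X Y \<phi>)"
    unfolding qmono_def using dxg_mem dxg_mono by (auto simp: pre_PD dxg_def)
  show "\<forall>l\<in>car (PD Y). ext (PD Y) l \<le> pre (PD Y) l (dxg X Y \<phi> (dxf X Y \<phi> l))"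
  proof
    fix l assume "l \<in> car (PD Y)"
    hence l: "l \<in> PD_car Y" by simp
    have m: "dxg X Y \<phi> (dxf X Y \<phi> l) \<in> PD_car Y" "fst (dxg X Y \<phi> (dxf X Y \<phi> l)) = fst l"
      using dxg_mem[OF dxf_mem(1)[OF l]] dxf_mem(2)[OF l] by auto
    have "fst l \<le> hPD Y l (dxg X Y \<phi> (dxf X Y \<phi> l))"
    proof (subst pd_le_iff[OF l m(1) refl m(2)], intro ballI)
      fix y assume y: "y \<in> car Y"
      have "COd X Y \<phi> (dxf X Y \<phi> l) y \<le> snd l () y"
        unfolding COd_def
      proof (rule Sup_least, clarify)
        fix x assume x: "x \<in> car X"
        show "qmult (rdiv (\<phi> x y) (ext X x)) (snd (dxf X Y \<phi> l) () x) \<le> snd l () y"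
          using RId_le[OF y, where X=X and \<phi>=\<phi> and l=l and x=x] l x by (simp add: dxf_def)
      qed
      thus "snd (dxg X Y \<phi> (dxf X Y \<phi> l)) () y \<le> snd l () y"
        using y dxf_mem(1)[OF l] by (simp add: dxg_def)
    qed
    thus "ext (PD Y) l \<le> pre (PD Y) l (dxg X Y \<phi> (dxf X Y \<phi> l))" using l m by (simp add: pre_PD)
  qed
  show "\<forall>k\<in>car (PD X). ext (PD X) k \<le> pre (PD X) (dxf X Y \<phi> (dxg X Y \<phi> k)) k"
  proof
    fix k assume "k \<in> car (PD X)"
    hence k: "k \<in> PD_car X" by simp
    have m: "dxf X Y \<phi> (dxg X Y \<phi> k) \<in> PD_car X" "fst (dxf X Y \<phi> (dxg X Y \<phi> k)) = fst k"
      using dxf_mem[OF dxg_mem(1)[OF k]] dxg_mem(2)[OF k] by auto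
    have "fst k \<le> hPD X (dxf X Y \<phi> (dxg X Y \<phi> k)) k"
    proof (subst pd_le_iff[OF m(1) k m(2) refl], intro ballI)
      fix x assume x: "x \<in> car X"
      have "snd k () x \<le> RId X Y \<phi> (dxg X Y \<phi> k) x"
      proof (rule RId_ge)
        show "snd k () x \<in> DQ (fst (dxg X Y \<phi> k)) (ext X x)" using PD_carD[OF k x] dxg_mem(2)[OF k] by simp
        show "\<forall>y\<in>car Y. qmult (rdiv (\<phi> x y) (ext X x)) (snd k () x) \<le> snd (dxg X Y \<phi> k) () y"
          using COd_ge[OF x, where Y=Y and \<phi>=\<phi> and k=k] k by (simp add: dxg_def)
      qed
      thus "snd k () x \<le> snd (dxf X Y \<phi> (dxg X Y \<phi> k)) () x"
        using x dxg_mem(1)[OF k] by (simp add: dxf_def)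
    qed
    thus "ext (PD X) k \<le> pre (PD X) (dxf X Y \<phi> (dxg X Y \<phi> k)) k" using k m by (simp add: pre_PD)
  qed
qed

lemma Yon_COd: assumes x: "x \<in> car X" and y: "y \<in> car Y" shows "COd X Y \<phi> (yd X x) y = \<phi> x y"
proof (rule antisym)
  show "COd X Y \<phi> (yd X x) y \<le> \<phi> x y" unfolding COd_def
    using dphiA[OF x _ y] by (auto simp: yd_def intro!: Sup_least)
  have "\<phi> x y \<le> qmult (rdiv (\<phi> x y) (ext X x)) (pre X x x)"
    by (rule le_unit_l[OF dphiDQ[OF x y] pre_refl[OF X x]])
  also have "\<dots> \<le> COd X Y \<phi> (yd X x) y" using COd_ge[OF x, where k="yd X x" and \<phi>=\<phi> and Y=Y] by (simp add: yd_def)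
  finally show "\<phi> x y \<le> COd X Y \<phi> (yd X x) y" .
qed

end


definition fromDx :: "('a,'q::quantale) qpos \<Rightarrow> ('b,'q) qpos \<Rightarrow> ('z \<times> (('q \<times> (unit \<Rightarrow> 'a \<Rightarrow> 'q)) \<Rightarrow> ('q \<times> (unit \<Rightarrow> 'b \<Rightarrow> 'q)))) \<Rightarrow> 'a \<Rightarrow> 'b \<Rightarrow> 'q"
  where "fromDx X Y p = (\<lambda>x y. if x \<in> car X then snd (snd p (yd X x)) () y else bot)"

lemma fromDx_Dx: fixes X :: "('a,'q::quantale) qpos" and Y :: "('b,'q) qpos"
  assumes X: "qpreordered X" and Y: "qpreordered Y" and d: "\<phi> \<in> distributors X Y"
  shows "fromDx X Y (dxf X Y \<phi>, dxg X Y \<phi>) = \<phi>"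
proof (intro ext)
  fix x y show "fromDx X Y (dxf X Y \<phi>, dxg X Y \<phi>) x y = \<phi> x y"
  proof (cases "x \<in> car X \<and> y \<in> car Y")
    case True thus ?thesis using Yon_COd[OF X Y d] yd_mem[OF X] by (simp add: fromDx_def dxg_def)
  next
    case False
    have "\<phi> x y = bot" using dist_D(1)[OF X Y d] False by (auto simp: qrel_qs)
    moreover have "x \<in> car X \<Longrightarrow> snd (dxg X Y \<phi> (yd X x)) () y = bot"
      using False yd_mem[OF X] by (simp add: dxg_def)
    ultimately show ?thesis by (simp add: fromDx_def)
  qed
qed

locale galDx =
  fixes X :: "('a,'q::quantale) qpos" and Y :: "('b,'q) qpos" and f g
  assumes X: "qpreordered X" and Y: "qpreordered Y" and gal: "qgalois (PD Y) (PD X) f g"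
begin

lemma fq: "qmono (PD Y) (PD X) f" and gq: "qmono (PD X) (PD Y) g"
  using gal by (auto simp: qgalois_def)
lemma fm: "l \<in> PD_car Y \<Longrightarrow> f l \<in> PD_car X \<and> fst (f l) = fst l"
  using qmonoD[OF fq, of l] by simp
lemma gm: "k \<in> PD_car X \<Longrightarrow> g k \<in> PD_car Y \<and> fst (g k) = fst k"
  using qmonoD[OF gq, of k] by simp
lemma unitP: assumes l: "l \<in> PD_car Y" and y: "y \<in> car Y" shows "snd (g (f l)) () y \<le> snd l () y"
proof -
  have m: "g (f l) \<in> PD_car Y" "fst (g (f l)) = fst l" using gm fm l by auto
  have "fst l \<le> pre (PD Y) l (g (f l))" using gal l by (auto simp: qgalois_def)
  hence "fst l \<le> hPD Y l (g (f l))" using pre_PD[OF l m(1)] by simp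
  thus ?thesis using pd_le_iff[OF l m(1) refl m(2)] y by blast
qed
lemma counitP: assumes k: "k \<in> PD_car X" and x: "x \<in> car X" shows "snd k () x \<le> snd (f (g k)) () x"
proof -
  have m: "f (g k) \<in> PD_car X" "fst (f (g k)) = fst k" using gm fm k by auto
  have "fst k \<le> pre (PD X) (f (g k)) k" using gal k by (auto simp: qgalois_def)
  hence "fst k \<le> hPD X (f (g k)) k" using pre_PD[OF m(1) k] by simp
  thus ?thesis using pd_le_iff[OF m(1) k m(2) refl] x by blast
qed

definition "\<phi> = fromDx X Y (f, g)"

lemma phi_x: "x \<in> car X \<Longrightarrow> \<phi> x y = snd (g (yd X x)) () y"
  by (simp add: \<phi>_def fromDx_def)

lemma gyd: "x \<in> car X \<Longrightarrow> g (yd X x) \<in> PD_car Y \<and> fst (g (yd X x)) = ext X x"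
  using gm yd_mem[OF X] by (simp add: yd_def)

lemma phi_dist: "\<phi> \<in> distributors X Y"
proof (rule dist_I[OF X Y])
  show "qrel (qs X) (qs Y) \<phi>" unfolding qrel_qs
  proof (intro conjI allI ballI impI)
    fix x y assume xy: "x \<in> car X" "y \<in> car Y"
    then show "\<phi> x y \<in> DQ (ext X x) (ext Y y)" using gyd[OF xy(1)] PD_carD[of "g (yd X x)" Y y] phi_x by simp
  next
    fix x y assume h: "x \<notin> car X \<or> y \<notin> car Y"
    show "\<phi> x y = bot"
    proof (cases "x \<in> car X")
      case True
      with h have "y \<notin> car Y" by auto
      with gyd[OF True] PD_carD2[of "g (yd X x)" Y y "()"] show ?thesis using True phi_x by simp
    qed (simp add: \<phi>_def fromDx_def)
  qed
  show "distB X Y \<phi>" unfolding distB_def using PD_carD3[OF conjunct1[OF gyd]] phi_x by simp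
  show "distA X Y \<phi>" unfolding distA_def
  proof (intro ballI)
    fix x x' y assume xy: "x \<in> car X" "x' \<in> car X" "y \<in> car Y"
    have "pre X x x' \<le> hPD Y (g (yd X x)) (g (yd X x'))"
      using yd_hom[OF X xy(1,2)] mono_PD_PD[OF gq yd_mem[OF X xy(1)] yd_mem[OF X xy(2)]] by (rule order_trans)
    hence "qmult (rdiv (\<phi> x' y) (ext X x')) (pre X x x') \<le>
        qmult (rdiv (snd (g (yd X x')) () y) (fst (g (yd X x')))) (hPD Y (g (yd X x)) (g (yd X x')))"
      using gyd[OF xy(2)] phi_x[OF xy(2)] by (simp add: qmult_mono_r)
    also have "\<dots> \<le> snd (g (yd X x)) () y" by (rule hPD_le'[OF xy(3)])
    finally show "qmult (rdiv (\<phi> x' y) (ext X x')) (pre X x x') \<le> \<phi> x y" using phi_x[OF xy(1)] by simp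
  qed
qed

lemma f_eq: assumes l: "l \<in> PD_car Y" and x: "x \<in> car X"
  shows "snd (f l) () x = RId X Y \<phi> l x"
proof (rule antisym)
  let ?u = "snd (f l) () x"
  have fl: "f l \<in> PD_car X" "fst (f l) = fst l" using fm[OF l] by auto
  show "?u \<le> RId X Y \<phi> l x"
  proof (rule RId_ge)
    show "?u \<in> DQ (fst l) (ext X x)" using PD_carD[OF fl(1) x] fl(2) by simp
    show "\<forall>y\<in>car Y. qmult (rdiv (\<phi> x y) (ext X x)) ?u \<le> snd l () y"
    proof
      fix y assume y: "y \<in> car Y"
      have h1: "?u \<le> hPD Y (g (f l)) (g (yd X x))"
        using YH_PD[OF fl(1) x] mono_PD_PD[OF gq fl(1) yd_mem[OF X x]] by (rule order_trans)
      have "qmult (rdiv (\<phi> x y) (ext X x)) ?u \<le> qmult (rdiv (\<phi> x y) (ext X x)) (hPD Y (g (f l)) (g (yd X x)))"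
        by (rule qmult_mono_r[OF h1])
      also have "\<dots> = qmult (rdiv (snd (g (yd X x)) () y) (fst (g (yd X x)))) (hPD Y (g (f l)) (g (yd X x)))"
        using gyd[OF x] phi_x[OF x] by simp
      also have "\<dots> \<le> snd (g (f l)) () y" by (rule hPD_le'[OF y])
      also have "\<dots> \<le> snd l () y" by (rule unitP[OF l y])
      finally show "qmult (rdiv (\<phi> x y) (ext X x)) ?u \<le> snd l () y" .
    qed
  qed
  let ?v = "RId X Y \<phi> l x"
  have v: "?v \<in> DQ (fst l) (ext X x)" by (rule RId_props(1))
  have "?v \<le> hPD Y l (g (yd X x))"
  proof (rule hPD_ge)
    show "?v \<in> DQ (fst l) (fst (g (yd X x)))" using v gyd[OF x] by simp
    show "\<forall>y\<in>car Y. qmult (rdiv (snd (g (yd X x)) () y) (fst (g (yd X x)))) ?v \<le> snd l () y"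
      using RId_le[where X=X and \<phi>=\<phi> and l=l and x=x] phi_x[OF x] gyd[OF x] by simp
  qed
  also have "\<dots> \<le> hPD X (f l) (f (g (yd X x)))" by (rule mono_PD_PD[OF fq l conjunct1[OF gyd[OF x]]])
  finally have vle: "?v \<le> hPD X (f l) (f (g (yd X x)))" .
  have fg: "f (g (yd X x)) \<in> PD_car X" "fst (f (g (yd X x))) = ext X x" using fm gyd[OF x] by auto
  have "ext X x \<le> snd (f (g (yd X x))) () x"
    using pre_refl[OF X x] counitP[OF yd_mem[OF X x] x] by (simp add: yd_def)
  hence "?v \<le> qmult (rdiv (snd (f (g (yd X x))) () x) (ext X x)) ?v" by (rule le_mult_unit_rdiv)
  also have "\<dots> \<le> qmult (rdiv (snd (f (g (yd X x))) () x) (fst (f (g (yd X x))))) (hPD X (f l) (f (g (yd X x))))"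
    using vle fg(2) by (simp add: qmult_mono_r)
  also have "\<dots> \<le> ?u" by (rule hPD_le'[OF x])
  finally show "?v \<le> ?u" .
qed

lemma f_dx: "f = dxf X Y \<phi>"
proof
  fix l show "f l = dxf X Y \<phi> l"
  proof (cases "l \<in> PD_car Y")
    case True
    show ?thesis
      using fm[OF True] dxf_mem[OF X Y phi_dist True]
      by (intro PD_eqI) (auto simp add: f_eq[OF True] dxf_def True)
  next
    case False thus ?thesis using qmonoD3[OF fq, of l] by (simp add: dxf_def)
  qed
qed

lemma g_eq: assumes k: "k \<in> PD_car X" and y: "y \<in> car Y"
  shows "snd (g k) () y = COd X Y \<phi> k y"
proof (rule antisym)
  have gk: "g k \<in> PD_car Y" "fst (g k) = fst k" using gm[OF k] by auto
  show "COd X Y \<phi> k y \<le> snd (g k) () y" unfolding COd_def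
  proof (rule Sup_least, clarify)
    fix x assume x: "x \<in> car X"
    have "snd k () x \<le> hPD Y (g k) (g (yd X x))"
      using YH_PD[OF k x] mono_PD_PD[OF gq k yd_mem[OF X x]] by (rule order_trans)
    hence "qmult (rdiv (\<phi> x y) (ext X x)) (snd k () x) \<le>
        qmult (rdiv (snd (g (yd X x)) () y) (fst (g (yd X x)))) (hPD Y (g k) (g (yd X x)))"
      using gyd[OF x] phi_x[OF x] by (simp add: qmult_mono_r)
    also have "\<dots> \<le> snd (g k) () y" by (rule hPD_le'[OF y])
    finally show "qmult (rdiv (\<phi> x y) (ext X x)) (snd k () x) \<le> snd (g k) () y" .
  qed
  define l where "l = dxg X Y \<phi> k"
  have l: "l \<in> PD_car Y" "fst l = fst k" using dxg_mem[OF X Y phi_dist k] by (auto simp: l_def)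
  have fl: "f l \<in> PD_car X" "fst (f l) = fst k" using fm[OF l(1)] l(2) by auto
  have "fst k \<le> hPD X (f l) k"
  proof (subst pd_le_iff[OF fl(1) k fl(2) refl], intro ballI)
    fix x assume x: "x \<in> car X"
    have "snd k () x \<le> RId X Y \<phi> l x"
    proof (rule RId_ge)
      show "snd k () x \<in> DQ (fst l) (ext X x)" using PD_carD[OF k x] l(2) by simp
      show "\<forall>y\<in>car Y. qmult (rdiv (\<phi> x y) (ext X x)) (snd k () x) \<le> snd l () y"
        using COd_ge[OF x, where Y=Y and \<phi>=\<phi> and k=k] k by (simp add: l_def dxg_def)
    qed
    thus "snd k () x \<le> snd (f l) () x" using f_eq[OF l(1) x] by simp
  qed
  also have "\<dots> \<le> hPD Y (g (f l)) (g k)" by (rule mono_PD_PD[OF gq fl(1) k])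
  finally have "fst k \<le> hPD Y (g (f l)) (g k)" .
  moreover have gfl: "g (f l) \<in> PD_car Y" "fst (g (f l)) = fst k" using gm[OF fl(1)] fl(2) by auto
  ultimately have "snd (g k) () y \<le> snd (g (f l)) () y" using pd_le_iff[OF gfl(1) gk(1) gfl(2) gk(2)] y by blast
  also have "\<dots> \<le> snd l () y" by (rule unitP[OF l(1) y])
  also have "\<dots> = COd X Y \<phi> k y" using k y by (simp add: l_def dxg_def)
  finally show "snd (g k) () y \<le> COd X Y \<phi> k y" .
qed

lemma g_dx: "g = dxg X Y \<phi>"
proof
  fix k show "g k = dxg X Y \<phi> k"
  proof (cases "k \<in> PD_car X")
    case True
    show ?thesis
      using gm[OF True] dxg_mem[OF X Y phi_dist True]
      by (intro PD_eqI) (auto simp add: g_eq[OF True] dxg_def True)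
  next
    case False thus ?thesis using qmonoD3[OF gq, of k] by (simp add: dxg_def)
  qed
qed

end

lemma bij_f: fixes X :: "('a,'q::quantale) qpos" and Y :: "('b,'q) qpos"
  assumes X: "qpreordered X" and Y: "qpreordered Y"
  shows "bij_betw (\<lambda>\<phi>. (dxf X Y \<phi>, dxg X Y \<phi>)) (distributors X Y) (dual_axialities Y X)"
proof (rule bij_betw_byWitness[where f'="fromDx X Y"])
  show "\<forall>\<phi>\<in>distributors X Y. fromDx X Y (dxf X Y \<phi>, dxg X Y \<phi>) = \<phi>"
    using fromDx_Dx[OF X Y] by blast
  show "\<forall>p\<in>dual_axialities Y X. (dxf X Y (fromDx X Y p), dxg X Y (fromDx X Y p)) = p"
  proof
    fix p assume "p \<in> dual_axialities Y X"
    then obtain f g where p: "p = (f, g)" and gal: "qgalois (PD Y) (PD X) f g"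
      by (auto simp: dual_axialities_def qgalois_set_def)
    interpret galDx X Y f g using X Y gal by unfold_locales
    show "(dxf X Y (fromDx X Y p), dxg X Y (fromDx X Y p)) = p"
      using f_dx g_dx unfolding p \<phi>_def by simp
  qed
  show "(\<lambda>\<phi>. (dxf X Y \<phi>, dxg X Y \<phi>)) ` distributors X Y \<subseteq> dual_axialities Y X"
    using Dx_gal[OF X Y] by (auto simp: dual_axialities_def qgalois_set_def)
  show "fromDx X Y ` dual_axialities Y X \<subseteq> distributors X Y"
  proof clarify
    fix p assume "p \<in> dual_axialities Y X"
    then obtain f g where p: "p = (f, g)" and gal: "qgalois (PD Y) (PD X) f g"
      by (auto simp: dual_axialities_def qgalois_set_def)
    interpret galDx X Y f g using X Y gal by unfold_locales
    show "fromDx X Y p \<in> distributors X Y" using phi_dist unfolding p \<phi>_def .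
  qed
qed


theorem theorem4p24:
  fixes X :: "('a, 'q::quantale) qpos" and Y :: "('b, 'q) qpos"
  assumes "qpreordered X" and "qpreordered Y"
  shows "(\<exists>F. bij_betw F (distributors X Y) (qmaps Y (PP X))) \<and>
         (\<exists>F. bij_betw F (distributors X Y) (qmaps X (PD Y))) \<and>
         (\<exists>F. bij_betw F (distributors X Y) (polarities X Y)) \<and>
         (\<exists>F. bij_betw F (distributors X Y) (axialities Y X)) \<and>
         (\<exists>F. bij_betw F (distributors X Y) (dual_axialities Y X))"
  using bij_b[OF assms] bij_c[OF assms] bij_d[OF assms] bij_e[OF assms] bij_f[OF assms] by blast

end
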